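(* Let $k\ge1$, $n=2^k$, and let $A$ be the $n\times n$ de Bruijn matrix. Then: (1) $\frac{1}{2\log n}\le\phi(A)\le\frac{8}{\log n}$; (2) $A$ is doubly stochastic, the eigenvalue $1$ is simple, and all other eigenvalues of $A$ are $0$; (3) $\Gamma(n)\le\frac{8}{\log n}$; (4) there is a real orthogonal matrix $U$ such that $U^TAU$ is a Jordan normal form of $A$, consisting of one block of size $1$ for eigenvalue $1$ and, for eigenvalue $0$, exactly $2^{k-1-r}$ Jordan blocks of size $r$ for each $r\in\{1,\dots,k-1\}$ and exactly one Jordan block of size $k$; (5) $A$ has $n/2$ singular values equal to $1$ and $n/2$ singular values equal to $0$.
   Context: Logarithms are base $2$. The de Bruijn matrix has rows and columns indexed by $\{0,1\}^k$; for $a=a_1a_2\cdots a_k$, $A_{b,a}=\frac12$ if $b\in\{a_2\cdots a_k0,\ a_2\cdots a_k1\}$ and $A_{b,a}=0$ otherwise. For a doubly stochastic $M$, $\phi(M)=\min_{S:\,1\le|S|\le n/2}\frac1{|S|}\sum_{i\in S,j\notin S}M_{i,j}$. $\Gamma(n)=\inf_M\phi(M)/(1-\operatorname{Re}\lambda_2(M))$ over all $n\times n$ doubly stochastic $M$, where $\lambda_2(M)$ is an eigenvalue of largest real part among the eigenvalues of $M$ remaining after removing one copy of the eigenvalue $1$ (counted with multiplicity), with the convention $x/0=+\infty$. *)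

theory Defs
  imports "Jordan_Normal_Form.Jordan_Normal_Form" "HOL-Library.Extended_Real"
begin

text \<open>Index a bit string a_1 a_2 ... a_k by the natural number sum a_i 2^(k-i)
  (a_1 most significant).  Then a_2...a_k x corresponds to (2a mod 2^k) + x.\<close>
definition de_bruijn :: "nat \<Rightarrow> real mat" where
  "de_bruijn k = mat (2^k) (2^k)
     (\<lambda>(b, a). if b = (2 * a) mod 2^k \<or> b = (2 * a) mod 2^k + 1 then 1/2 else 0)"

definition doubly_stochastic :: "nat \<Rightarrow> real mat \<Rightarrow> bool" where
  "doubly_stochastic n M \<longleftrightarrow> M \<in> carrier_mat n n
     \<and> (\<forall>i<n. \<forall>j<n. M $$ (i, j) \<ge> 0)
     \<and> (\<forall>i<n. (\<Sum>j<n. M $$ (i, j)) = 1)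
     \<and> (\<forall>j<n. (\<Sum>i<n. M $$ (i, j)) = 1)"

definition edge_expansion :: "real mat \<Rightarrow> real" where
  "edge_expansion M = (let n = dim_row M in
     Min {(1 / real (card S)) * (\<Sum>i\<in>S. \<Sum>j\<in>{0..<n} - S. M $$ (i, j)) | S.
            S \<subseteq> {0..<n} \<and> 1 \<le> card S \<and> real (card S) \<le> real n / 2})"

definition eigenvalues_mset :: "real mat \<Rightarrow> complex multiset" where
  "eigenvalues_mset M = proots (char_poly (map_mat complex_of_real M))"

definition re_lambda2 :: "real mat \<Rightarrow> real" where
  "re_lambda2 M = Max (Re ` set_mset (eigenvalues_mset M - {#1#}))"

definition Gamma :: "nat \<Rightarrow> ereal" where
  "Gamma n = (INF M \<in> {M. doubly_stochastic n M}.
     (if 1 - re_lambda2 M = 0 then \<infinity> else ereal (edge_expansion M / (1 - re_lambda2 M))))"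

text \<open>Singular values: square roots of the eigenvalues of A^T A (which are real and nonnegative),
  with multiplicity.\<close>
definition singular_values :: "real mat \<Rightarrow> real multiset" where
  "singular_values A = image_mset (\<lambda>z. sqrt (Re z)) (eigenvalues_mset (transpose_mat A * A))"

end

theory Submission
  imports Defs
begin

definition Af :: "nat \<Rightarrow> nat \<Rightarrow> nat \<Rightarrow> real" where
  "Af k b a = (if b div 2 = a mod 2^(k-1) then 1/2 else 0)"

lemma two_mod_pow: "k \<ge> 1 \<Longrightarrow> (2 * a) mod (2::nat)^k = 2 * (a mod 2^(k-1))"
proof -
  assume "k \<ge> 1"
  then obtain k' where k: "k = Suc k'" by (cases k) auto
  have "(2 * a) mod (2 * 2^k') = 2 * (a mod 2^k')" by (metis mult_mod_right)
  then show ?thesis unfolding k by simp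
qed

lemma db_entry:
  assumes "k \<ge> 1" "b < 2^k" "a < 2^k"
  shows "de_bruijn k $$ (b,a) = Af k b a"
proof -
  have g: "(b = 2 * c \<or> b = 2 * c + 1) \<longleftrightarrow> b div 2 = c" for c :: nat by presburger
  have e: "(b = (2 * a) mod 2^k \<or> b = (2 * a) mod 2^k + 1) \<longleftrightarrow> b div 2 = a mod 2^(k-1)"
    unfolding two_mod_pow[OF assms(1)] by (rule g)
  have "de_bruijn k $$ (b,a) = (if b = (2 * a) mod 2^k \<or> b = (2 * a) mod 2^k + 1 then 1/2 else 0)"
    unfolding de_bruijn_def by (subst index_mat(1)) (use assms in auto)
  then show ?thesis unfolding Af_def e .
qed

lemma db_carrier: "de_bruijn k \<in> carrier_mat (2^k) (2^k)"
  unfolding de_bruijn_def by (rule mat_carrier)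

lemma Af_nonneg: "Af k b a \<ge> 0" unfolding Af_def by auto

lemma sum_if_half: "finite A \<Longrightarrow> (\<Sum>x\<in>A. (if P x then 1/2 else 0) * (g x::real)) = (\<Sum>x\<in>{x\<in>A. P x}. g x / 2)"
proof -
  assume "finite A"
  then have "(\<Sum>x\<in>{x\<in>A. P x}. g x / 2) = (\<Sum>x\<in>A. if P x then g x / 2 else 0)" by (rule sum.inter_filter)
  also have "\<dots> = (\<Sum>x\<in>A. (if P x then 1/2 else 0) * g x)" by (rule sum.cong) auto
  finally show ?thesis by simp
qed

lemma div2_iff: "((b::nat) div 2 = c) \<longleftrightarrow> (b = 2 * c \<or> b = 2 * c + 1)" by presburger

lemma sum_pair_set:
  assumes "c < (2::nat)^k'"
  shows "{a. a < 2^Suc k' \<and> a mod 2^k' = c} = {c, c + 2^k'}"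
proof -
  have "a = c \<or> a = c + 2^k'" if "a < 2^Suc k'" "a mod 2^k' = c" for a
  proof -
    have "a = 2^k' * (a div 2^k') + a mod 2^k'" by simp
    moreover have "a div 2^k' < 2" using that(1) by (simp add: less_mult_imp_div_less mult.commute)
    moreover have "a div 2^k' = 0 \<or> a div 2^k' = 1" using \<open>a div 2^k' < 2\<close> by linarith
    ultimately show ?thesis using that(2) by (metis add.commute add_0 mult_0_right nat_mult_1_right)
  qed
  moreover have "c < 2^Suc k'" "c + 2^k' < 2^Suc k'" using assms by auto
  moreover have "(c + 2^k') mod 2^k' = c" using assms by simp
  ultimately show ?thesis using assms by auto
qed

lemma row_sum_gen:
  assumes k: "k = Suc k'" and b: "b < 2^k"
  shows "(\<Sum>a<2^k. Af k b a * g a) = (g (b div 2) + g (b div 2 + 2^k')) / 2"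
proof -
  have c: "b div 2 < 2^k'" using b k by (simp add: less_mult_imp_div_less)
  have "(\<Sum>a<2^k. Af k b a * g a) = (\<Sum>a\<in>{a. a < 2^k \<and> a mod 2^k' = b div 2}. g a / 2)"
    unfolding Af_def by (subst sum_if_half) (auto simp: eq_commute k)
  also have "\<dots> = (\<Sum>a\<in>{b div 2, b div 2 + 2^k'}. g a / 2)"
    unfolding k using sum_pair_set[OF c] by simp
  also have "\<dots> = (g (b div 2) + g (b div 2 + 2^k')) / 2" by (simp add: add_divide_distrib)
  finally show ?thesis .
qed

lemma col_sum_gen:
  assumes k: "k = Suc k'" and a: "a < 2^k"
  shows "(\<Sum>b<2^k. Af k b a * g b) = (g (2 * (a mod 2^k')) + g (2 * (a mod 2^k') + 1)) / 2"
proof -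
  let ?c = "a mod 2^k'"
  have c: "?c < 2^k'" by simp
  have s: "{b. b < 2^k \<and> b div 2 = ?c} = {2*?c, 2*?c+1}"
  proof -
    have "2*?c + 1 < 2 * 2^k'" using c by linarith
    then have "2*?c + 1 < 2^k" using k by simp
    then show ?thesis unfolding div2_iff by auto
  qed
  have "(\<Sum>b<2^k. Af k b a * g b) = (\<Sum>b\<in>{b. b < 2^k \<and> b div 2 = ?c}. g b / 2)"
    unfolding Af_def by (subst sum_if_half) (auto simp: k)
  also have "\<dots> = (g (2*?c) + g (2*?c+1)) / 2" unfolding s by (simp add: add_divide_distrib)
  finally show ?thesis .
qed

lemma Af_row_sum: "k \<ge> 1 \<Longrightarrow> b < 2^k \<Longrightarrow> (\<Sum>a<2^k. Af k b a) = 1"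
  using row_sum_gen[of k "k-1" b "\<lambda>_. 1"] by simp

lemma Af_col_sum: "k \<ge> 1 \<Longrightarrow> a < 2^k \<Longrightarrow> (\<Sum>b<2^k. Af k b a) = 1"
  using col_sum_gen[of k "k-1" a "\<lambda>_. 1"] by simp

lemma db_doubly_stochastic:
  assumes "k \<ge> 1" shows "doubly_stochastic (2^k) (de_bruijn k)"
  unfolding doubly_stochastic_def
proof (intro conjI allI impI)
  show "de_bruijn k \<in> carrier_mat (2^k) (2^k)" by (rule db_carrier)
  fix i j :: nat assume "i < 2^k" "j < 2^k"
  then show "0 \<le> de_bruijn k $$ (i, j)" using db_entry[OF assms] Af_nonneg by simp
next
  fix i :: nat assume i: "i < 2^k"
  have "(\<Sum>j<2^k. de_bruijn k $$ (i, j)) = (\<Sum>j<2^k. Af k i j)"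
    by (rule sum.cong) (use db_entry[OF assms] i in auto)
  then show "(\<Sum>j<2^k. de_bruijn k $$ (i, j)) = 1" using Af_row_sum[OF assms i] by simp
next
  fix j :: nat assume j: "j < 2^k"
  have "(\<Sum>i<2^k. de_bruijn k $$ (i, j)) = (\<Sum>i<2^k. Af k i j)"
    by (rule sum.cong) (use db_entry[OF assms] j in auto)
  then show "(\<Sum>i<2^k. de_bruijn k $$ (i, j)) = 1" using Af_col_sum[OF assms j] by simp
qed

definition cutf :: "nat \<Rightarrow> (nat \<Rightarrow> nat \<Rightarrow> real) \<Rightarrow> nat set \<Rightarrow> real" where
  "cutf n M S = (\<Sum>i\<in>S. \<Sum>j\<in>{..<n} - S. M i j)"

lemma cut_mult:
  fixes M N :: "nat \<Rightarrow> nat \<Rightarrow> real"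
  assumes S: "S \<subseteq> {..<n}"
    and Mnn: "\<And>i l. M i l \<ge> 0" and Nnn: "\<And>l j. N l j \<ge> 0"
    and Mc: "\<And>l. l < n \<Longrightarrow> (\<Sum>i<n. M i l) \<le> 1"
    and Nr: "\<And>l. l < n \<Longrightarrow> (\<Sum>j<n. N l j) \<le> 1"
  shows "cutf n (\<lambda>i j. \<Sum>l<n. M i l * N l j) S \<le> cutf n M S + cutf n N S"
proof -
  let ?I = "{..<n}"
  have fS: "finite S" using S finite_subset by blast
  define T where "T l = (\<Sum>i\<in>S. M i l) * (\<Sum>j\<in>?I - S. N l j)" for l
  have "cutf n (\<lambda>i j. \<Sum>l<n. M i l * N l j) S = (\<Sum>i\<in>S. \<Sum>j\<in>?I - S. \<Sum>l<n. M i l * N l j)"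
    unfolding cutf_def ..
  also have "\<dots> = (\<Sum>l<n. \<Sum>i\<in>S. \<Sum>j\<in>?I - S. M i l * N l j)"
  proof -
    have "(\<Sum>i\<in>S. \<Sum>j\<in>?I - S. \<Sum>l<n. M i l * N l j) = (\<Sum>i\<in>S. \<Sum>l<n. \<Sum>j\<in>?I - S. M i l * N l j)"
      by (rule sum.cong[OF refl], rule sum.swap)
    also have "\<dots> = (\<Sum>l<n. \<Sum>i\<in>S. \<Sum>j\<in>?I - S. M i l * N l j)"
      by (rule sum.swap)
    finally show ?thesis .
  qed
  also have "\<dots> = (\<Sum>l<n. T l)" unfolding T_def by (simp add: sum_product)
  also have "\<dots> \<le> (\<Sum>l<n. if l \<in> S then (\<Sum>j\<in>?I - S. N l j) else (\<Sum>i\<in>S. M i l))"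
  proof (rule sum_mono)
    fix l assume l: "l \<in> ?I"
    have a: "0 \<le> (\<Sum>i\<in>S. M i l)" "0 \<le> (\<Sum>j\<in>?I - S. N l j)"
      by (simp_all add: sum_nonneg Mnn Nnn)
    have b: "(\<Sum>i\<in>S. M i l) \<le> 1"
      using sum_mono2[of ?I S "\<lambda>i. M i l"] S Mnn Mc[of l] l by (auto simp: lessThan_def)
    have c: "(\<Sum>j\<in>?I - S. N l j) \<le> 1"
      using sum_mono2[of ?I "?I - S" "\<lambda>j. N l j"] Nnn Nr[of l] l by auto
    show "T l \<le> (if l \<in> S then (\<Sum>j\<in>?I - S. N l j) else (\<Sum>i\<in>S. M i l))"
      unfolding T_def using a b c
      by (auto intro: mult_left_le_one_le mult_right_le_one_le)
  qed
  also have "\<dots> = (\<Sum>l\<in>S. \<Sum>j\<in>?I - S. N l j) + (\<Sum>l\<in>?I - S. \<Sum>i\<in>S. M i l)"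
  proof -
    have "S \<inter> ?I = S" using S by auto
    then show ?thesis
      using sum.If_cases[of ?I "\<lambda>l. l \<in> S" "\<lambda>l. \<Sum>j\<in>?I - S. N l j" "\<lambda>l. \<Sum>i\<in>S. M i l"]
      by (simp add: Diff_eq Int_commute)
  qed
  also have "\<dots> = cutf n N S + cutf n M S"
    unfolding cutf_def by (subst sum.swap[of _ "?I - S"]) simp
  finally show ?thesis by simp
qed

primrec Pw :: "nat \<Rightarrow> nat \<Rightarrow> nat \<Rightarrow> nat \<Rightarrow> real" where
  "Pw k 0 b a = (if b = a then 1 else 0)"
| "Pw k (Suc m) b a = (\<Sum>l<2^k. Af k b l * Pw k m l a)"

lemma Pw_nonneg: "Pw k m b a \<ge> 0"
  by (induct m arbitrary: b) (auto intro!: sum_nonneg mult_nonneg_nonneg Af_nonneg)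

lemma Pw_row: assumes "k \<ge> 1" "b < 2^k" shows "(\<Sum>a<2^k. Pw k m b a) = 1"
  using assms(2)
proof (induct m arbitrary: b)
  case 0
  then show ?case by (simp add: sum.delta)
next
  case (Suc m)
  have "(\<Sum>a<2^k. Pw k (Suc m) b a) = (\<Sum>a<2^k. \<Sum>l<2^k. Af k b l * Pw k m l a)" by simp
  also have "\<dots> = (\<Sum>l<2^k. Af k b l * (\<Sum>a<2^k. Pw k m l a))"
    by (subst sum.swap) (simp add: sum_distrib_left)
  also have "\<dots> = (\<Sum>l<2^k. Af k b l)" using Suc(1) by simp
  also have "\<dots> = 1" using Af_row_sum[OF assms(1) Suc(2)] .
  finally show ?case .
qed

lemma cut_Pw:
  assumes k: "k \<ge> 1" and S: "S \<subseteq> {..<2^k}"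
  shows "cutf (2^k) (Pw k m) S \<le> real m * cutf (2^k) (Af k) S"
proof (induct m)
  case 0
  have "cutf (2^k) (Pw k 0) S = 0" unfolding cutf_def
    by (rule sum.neutral) (auto intro: sum.neutral)
  then show ?case by (simp del: Pw.simps)
next
  case (Suc m)
  have eq: "Pw k (Suc m) = (\<lambda>i j. \<Sum>l<2^k. Af k i l * Pw k m l j)" by (rule ext, rule ext) simp
  have "cutf (2^k) (Pw k (Suc m)) S \<le> cutf (2^k) (Af k) S + cutf (2^k) (Pw k m) S"
    unfolding eq
    by (rule cut_mult[OF S Af_nonneg Pw_nonneg]) (use Af_col_sum[OF k] Pw_row[OF k] in auto)
  then show ?case using Suc by (simp add: algebra_simps del: Pw.simps)
qed

lemma Pw_closed:
  assumes k: "k = Suc k'" and m: "m \<le> k" and b: "b < 2^k" and a: "a < 2^k"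
  shows "Pw k m b a = (if b div 2^m = a mod 2^(k-m) then 1/2^m else 0)"
  using m b
proof (induct m arbitrary: b)
  case 0
  then show ?case using a by simp
next
  case (Suc m)
  have mk: "m \<le> k'" using Suc(2) k by simp
  define p where "p = k' - m"
  have kp: "k' = m + p" using mk p_def by simp
  have b1: "b div 2 < 2^k" using Suc(3) by (simp add: less_mult_imp_div_less le_less_trans[OF div_le_dividend])
  have b2: "b div 2 + 2^k' < 2^k"
  proof -
    have "b div 2 < 2^k'" using Suc(3) k by (simp add: less_mult_imp_div_less)
    then show ?thesis using k by simp
  qed
  have "Pw k (Suc m) b a = (Pw k m (b div 2) a + Pw k m (b div 2 + 2^k') a) / 2"
    using row_sum_gen[OF k Suc(3), of "\<lambda>l. Pw k m l a"] by simp
  also have "\<dots> = ((if b div 2 div 2^m = a mod 2^(k-m) then 1/2^m else 0)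
                  + (if (b div 2 + 2^k') div 2^m = a mod 2^(k-m) then 1/2^m else 0)) / 2"
    using Suc(1)[OF _ b1] Suc(1)[OF _ b2] mk k by simp
  also have "\<dots> = (if b div 2^Suc m = a mod 2^(k - Suc m) then 1/2^Suc m else 0)"
  proof -
    define X :: nat where "X = 2^p"
    define x where "x = a mod 2^(k-m)"
    define y where "y = b div 2^Suc m"
    have km: "k - m = Suc p" "k - Suc m = p" using k kp by auto
    have X0: "X > 0" unfolding X_def by simp
    have x2: "x < 2 * X" unfolding x_def X_def km by simp
    have e1: "b div 2 div 2^m = y" unfolding y_def by (simp add: div_mult2_eq)
    have e2: "(b div 2 + 2^k') div 2^m = y + X"
    proof -
      have "(2::nat)^k' = 2^m * X" unfolding X_def kp by (simp add: power_add)
      then have "(b div 2 + 2^k') div 2^m = b div 2 div 2^m + X" by simp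
      then show ?thesis using e1 by simp
    qed
    have yX: "y < X"
    proof -
      have "b < 2^Suc m * X" using Suc(3) k kp unfolding X_def by (simp add: power_add)
      then show ?thesis unfolding y_def by (simp add: less_mult_imp_div_less mult.commute)
    qed
    have e3: "a mod 2^(k - Suc m) = x mod X"
    proof -
      have "X dvd 2^(k-m)" unfolding X_def km by simp
      then show ?thesis unfolding x_def km(2) X_def[symmetric] by (simp add: mod_mod_cancel)
    qed
    have key: "(if y = x then 1/2^m else 0) + (if y + X = x then 1/2^m else 0)
        = (if y = x mod X then (1::real)/2^m else 0)"
    proof (cases "x < X")
      case True
      then show ?thesis by simp
    next
      case False
      then have "x mod X = x - X" using x2 by (simp add: le_mod_geq)
      then show ?thesis using False yX by auto
    qed
    show ?thesis unfolding e1 e2 e3 x_def[symmetric] y_def[symmetric] using key by simp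
  qed
  finally show ?case .
qed

lemma Pw_full:
  assumes k: "k \<ge> 1" and b: "b < 2^k" and a: "a < 2^k"
  shows "Pw k k b a = 1/2^k"
proof -
  obtain k' where "k = Suc k'" using k by (cases k) auto
  from Pw_closed[OF this order_refl b a] show ?thesis using b by simp
qed

lemma cut_lower:
  assumes k: "k \<ge> 1" and S: "S \<subseteq> {..<2^k}" and c1: "1 \<le> card S"
    and c2: "real (card S) \<le> 2^k / 2"
  shows "real (card S) / (2 * real k) \<le> cutf (2^k) (Af k) S"
proof -
  have fS: "finite S" using S finite_subset by blast
  have "cutf (2^k) (Pw k k) S = (\<Sum>i\<in>S. \<Sum>j\<in>{..<2^k} - S. 1/2^k)"
    unfolding cutf_def
    by (rule sum.cong[OF refl], rule sum.cong[OF refl]) (use S Pw_full[OF k] in auto)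
  also have "\<dots> = real (card S) * real (card ({..<(2::nat)^k} - S)) / 2^k" by simp
  also have "card ({..<(2::nat)^k} - S) = 2^k - card S" using S fS by (simp add: card_Diff_subset)
  finally have e: "cutf (2^k) (Pw k k) S = real (card S) * real (2^k - card S) / 2^k" .
  have "card S \<le> 2^k" using card_mono[OF _ S] by simp
  then have r: "real (2^k - card S) = 2^k - real (card S)" by (simp add: of_nat_diff)
  have "real (card S) / 2 \<le> real (card S) * real (2^k - card S) / 2^k"
    unfolding r using c2 by (simp add: field_simps mult_left_mono)
  also have "\<dots> \<le> real k * cutf (2^k) (Af k) S" using e cut_Pw[OF k S, of k] by simp
  finally have "real (card S) / 2 \<le> real k * cutf (2^k) (Af k) S" .
  then show ?thesis using k by (simp add: field_simps)
qed

definition Wn :: "nat \<Rightarrow> nat \<Rightarrow> nat \<Rightarrow> nat" where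
  "Wn m q a = (a div 2^q) mod 2^m"

lemma mod_div_mod:
  assumes "r + m \<le> p"
  shows "((a::nat) mod 2^p) div 2^r mod 2^m = a div 2^r mod 2^m"
proof -
  have "take_bit m (drop_bit r (take_bit p a)) = take_bit m (drop_bit r a)"
    using assms by (simp add: drop_bit_take_bit take_bit_take_bit min_def)
  then show ?thesis by (simp add: take_bit_eq_mod drop_bit_eq_div)
qed

lemma Wn_shift:
  assumes "b div 2 = a mod 2^(k-1)" "1 \<le> q" "q + m \<le> k"
  shows "Wn m q b = Wn m (q-1) a"
proof -
  have "b div 2^q = b div 2 div 2^(q-1)"
    using assms(2) by (metis One_nat_def Suc_pred div_mult2_eq less_eq_Suc_le power_Suc)
  then have "Wn m q b = (a mod 2^(k-1)) div 2^(q-1) mod 2^m" unfolding Wn_def assms(1) by simp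
  also have "\<dots> = a div 2^(q-1) mod 2^m" by (rule mod_div_mod) (use assms in auto)
  finally show ?thesis unfolding Wn_def .
qed

definition rot :: "nat \<Rightarrow> nat \<Rightarrow> nat" where
  "rot k a = 2 * (a mod 2^(k-1)) + a div 2^(k-1)"

lemma rot_props:
  assumes k: "k \<ge> 1" and a: "a < 2^k"
  shows "rot k a < 2^k" "rot k a div 2 = a mod 2^(k-1)" "rot k a mod 2 = a div 2^(k-1)"
proof -
  have kk: "(2::nat)^k = 2 * 2^(k-1)" using k by (cases k) auto
  have d: "a div 2^(k-1) < 2" using a kk by (simp add: less_mult_imp_div_less mult.commute)
  have m: "a mod 2^(k-1) < 2^(k-1)" by simp
  show "rot k a < 2^k" unfolding rot_def kk using d m by linarith
  show "rot k a div 2 = a mod 2^(k-1)" unfolding rot_def using d by simp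
  show "rot k a mod 2 = a div 2^(k-1)" unfolding rot_def using d by simp
qed

lemma rot_inj: assumes k: "k \<ge> 1" shows "inj_on (rot k) {..<2^k}"
proof (rule inj_onI)
  fix a a' assume a: "a \<in> {..<2^k}" and a': "a' \<in> {..<2^k}" and e: "rot k a = rot k a'"
  have "a mod 2^(k-1) = a' mod 2^(k-1)" "a div 2^(k-1) = a' div 2^(k-1)"
    using rot_props[OF k] a a' e by (metis lessThan_iff)+
  then show "a = a'" by (metis div_mult_mod_eq)
qed

context
  fixes k m c :: nat
  assumes k1: "k \<ge> 1" and m1: "m \<ge> 1" and c1: "c \<ge> 1" and cL: "c \<le> k - m"
    and c2: "c \<le> 2^(m-1)"
begin

definition occ :: "nat \<Rightarrow> nat \<Rightarrow> bool" where "occ q a = (Wn m q a = 1)"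

definition Sset :: "nat set" where
  "Sset = {a. a < 2^k \<and> (\<exists>q. k-m-c < q \<and> q \<le> k-m \<and> occ q a)}"

definition Dset :: "nat \<Rightarrow> nat set" where
  "Dset d = {a. a < 2^k \<and> occ (k-m-d) a \<and> (\<forall>q. k-m-d < q \<and> q \<le> k-m \<longrightarrow> \<not> occ q a)}"

lemma div_eq_one: "0 < (X::nat) \<Longrightarrow> a div X = 1 \<longleftrightarrow> X \<le> a \<and> a < 2 * X"
proof
  assume X: "0 < X" and "a div X = 1"
  then have "a = X + a mod X" using div_mult_mod_eq[of a X] by simp
  then show "X \<le> a \<and> a < 2 * X" using mod_less_divisor[OF X, of a] by linarith
next
  assume X: "0 < X" and h: "X \<le> a \<and> a < 2 * X"
  then have "a div X = Suc ((a - X) div X)" by (simp add: le_div_geq)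
  moreover have "a - X < X" using h by linarith
  then have "(a - X) div X = 0" by (simp add: div_eq_0_iff)
  ultimately show "a div X = 1" by simp
qed

lemma occ_shift:
  assumes "b div 2 = a mod 2^(k-1)" "1 \<le> q" "q \<le> k - m"
  shows "occ q b = occ (q-1) a"
proof -
  have "q + m \<le> k" using assms(3) cL c1 by linarith
  then show ?thesis unfolding occ_def using Wn_shift[OF assms(1,2)] by simp
qed

lemma S_sub: "Sset \<subseteq> {..<2^k}" unfolding Sset_def by auto
lemma D_sub: "Dset d \<subseteq> {..<2^k}" unfolding Dset_def by auto

lemma Dc_notin_S: "Dset c \<inter> Sset = {}"
  unfolding Dset_def Sset_def by auto

lemma entering:
  assumes i: "i \<in> Sset" and j: "j < 2^k" "j \<notin> Sset" and A: "Af k i j \<noteq> 0"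
  shows "j \<in> Dset c"
proof -
  from i obtain q where q: "k-m-c < q" "q \<le> k-m" "occ q i" unfolding Sset_def by auto
  have e: "i div 2 = j mod 2^(k-1)" using A unfolding Af_def by (auto split: if_splits)
  have q1: "1 \<le> q" using q(1) by simp
  have oj: "occ (q-1) j" using occ_shift[OF e q1 q(2)] q(3) by simp
  have nj: "\<forall>q'. k-m-c < q' \<and> q' \<le> k-m \<longrightarrow> \<not> occ q' j" using j unfolding Sset_def by auto
  have "q - 1 = k - m - c"
  proof (rule ccontr)
    assume "q - 1 \<noteq> k - m - c"
    then have "k-m-c < q-1" "q - 1 \<le> k - m" using q by auto
    then show False using nj oj by blast
  qed
  then show ?thesis using oj nj j unfolding Dset_def by auto
qed

lemma cut_le_D: "cutf (2^k) (Af k) Sset \<le> real (card (Dset c))"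
proof -
  have fD: "finite (Dset c)" using D_sub finite_subset by blast
  have "cutf (2^k) (Af k) Sset = (\<Sum>i\<in>Sset. \<Sum>j\<in>Dset c. Af k i j)"
    unfolding cutf_def
  proof (rule sum.cong[OF refl])
    fix i assume i: "i \<in> Sset"
    show "(\<Sum>j\<in>{..<2^k} - Sset. Af k i j) = (\<Sum>j\<in>Dset c. Af k i j)"
    proof (rule sum.mono_neutral_right)
      show "Dset c \<subseteq> {..<2^k} - Sset" using D_sub Dc_notin_S by auto
      show "\<forall>j\<in>{..<2^k} - Sset - Dset c. Af k i j = 0" using entering[OF i] by auto
    qed auto
  qed
  also have "\<dots> = (\<Sum>j\<in>Dset c. \<Sum>i\<in>Sset. Af k i j)" by (rule sum.swap)
  also have "\<dots> \<le> (\<Sum>j\<in>Dset c. \<Sum>i<2^k. Af k i j)"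
    by (rule sum_mono, rule sum_mono2) (use S_sub Af_nonneg in auto)
  also have "\<dots> = (\<Sum>j\<in>Dset c. 1)"
    by (rule sum.cong[OF refl]) (use Af_col_sum[OF k1] D_sub in auto)
  finally show ?thesis by simp
qed

lemma D_disj: assumes "d < d'" "d' \<le> k - m" shows "Dset d \<inter> Dset d' = {}"
proof (rule ccontr)
  assume "Dset d \<inter> Dset d' \<noteq> {}"
  then obtain x where x: "x \<in> Dset d" "x \<in> Dset d'" by auto
  have "k-m-d' < k-m-d" "k-m-d \<le> k-m" using assms by auto
  then show False using x unfolding Dset_def by blast
qed

lemma S_union: "Sset = (\<Union>d<c. Dset d)"
proof
  show "(\<Union>d<c. Dset d) \<subseteq> Sset"
  proof
    fix a assume "a \<in> (\<Union>d<c. Dset d)"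
    then obtain d where d: "d < c" "a \<in> Dset d" by auto
    then have "k-m-c < k-m-d" "k-m-d \<le> k-m" using cL by auto
    then show "a \<in> Sset" using d unfolding Dset_def Sset_def by auto
  qed
  show "Sset \<subseteq> (\<Union>d<c. Dset d)"
  proof
    fix a assume a: "a \<in> Sset"
    define Q where "Q = {q. k-m-c < q \<and> q \<le> k-m \<and> occ q a}"
    have fQ: "finite Q" unfolding Q_def by simp
    have nQ: "Q \<noteq> {}" using a unfolding Q_def Sset_def by auto
    define q where "q = Max Q"
    have qQ: "q \<in> Q" unfolding q_def using Max_in[OF fQ nQ] .
    have qmax: "\<And>q'. q' \<in> Q \<Longrightarrow> q' \<le> q" unfolding q_def using Max_ge[OF fQ] by auto
    define d where "d = k - m - q"
    have qd: "q = k - m - d" "d < c" using qQ cL unfolding d_def Q_def by auto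
    have "a \<in> Dset d"
      unfolding Dset_def
    proof (intro CollectI conjI allI impI)
      show "a < 2^k" using a unfolding Sset_def by auto
      show "occ (k - m - d) a" using qQ qd(1) unfolding Q_def by auto
      fix q' assume h: "k - m - d < q' \<and> q' \<le> k - m"
      show "\<not> occ q' a"
      proof
        assume "occ q' a"
        then have "q' \<in> Q" using h qQ qd cL unfolding Q_def by auto
        then show False using qmax h qd(1) by fastforce
      qed
    qed
    then show "a \<in> (\<Union>d<c. Dset d)" using qd(2) by auto
  qed
qed

lemma card_S: "card Sset = (\<Sum>d<c. card (Dset d))"
  unfolding S_union
proof (rule card_UN_disjoint)
  show "finite {..<c}" by simp
  show "\<forall>i\<in>{..<c}. finite (Dset i)" using D_sub finite_subset by blast
  show "\<forall>i\<in>{..<c}. \<forall>j\<in>{..<c}. i \<noteq> j \<longrightarrow> Dset i \<inter> Dset j = {}"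
    using D_disj cL by (metis Int_commute lessThan_iff linorder_neqE_nat order.trans less_imp_le)
qed

lemma D_mono: assumes "Suc d \<le> k - m" shows "card (Dset (Suc d)) \<le> card (Dset d)"
proof -
  have "rot k ` Dset (Suc d) \<subseteq> Dset d"
  proof
    fix b assume "b \<in> rot k ` Dset (Suc d)"
    then obtain a where a: "a \<in> Dset (Suc d)" and b: "b = rot k a" by auto
    have a2: "a < 2^k" using a unfolding Dset_def by auto
    note rp = rot_props[OF k1 a2]
    have "occ (k-m-d) b = occ (k-m-d-1) a"
      unfolding b by (rule occ_shift[OF rp(2)]) (use assms in auto)
    moreover have "k-m-d-1 = k-m-Suc d" by simp
    ultimately have o1: "occ (k-m-d) b" using a unfolding Dset_def by auto
    have o2: "\<not> occ q b" if "k-m-d < q" "q \<le> k-m" for q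
    proof -
      have "occ q b = occ (q-1) a" unfolding b by (rule occ_shift[OF rp(2)]) (use that in auto)
      moreover have "k-m-Suc d < q-1" "q-1 \<le> k-m" using that assms by auto
      ultimately show ?thesis using a unfolding Dset_def by auto
    qed
    show "b \<in> Dset d" unfolding Dset_def using o1 o2 rp(1) b by auto
  qed
  moreover have "inj_on (rot k) (Dset (Suc d))" using rot_inj[OF k1] D_sub inj_on_subset by blast
  moreover have "finite (Dset d)" using D_sub finite_subset by blast
  ultimately show ?thesis using card_inj_on_le by blast
qed

lemma D_mono': assumes "d \<le> d'" "d' \<le> k - m" shows "card (Dset d') \<le> card (Dset d)"
proof -
  have "\<forall>d'. d \<le> d' \<and> d' \<le> k - m \<longrightarrow> card (Dset d') \<le> card (Dset d)"
  proof
    fix d'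
    show "d \<le> d' \<and> d' \<le> k - m \<longrightarrow> card (Dset d') \<le> card (Dset d)"
    proof (induct d')
      case 0 then show ?case by auto
    next
      case (Suc x)
      show ?case
      proof
        assume h: "d \<le> Suc x \<and> Suc x \<le> k - m"
        show "card (Dset (Suc x)) \<le> card (Dset d)"
        proof (cases "d = Suc x")
          case False
          then have "card (Dset x) \<le> card (Dset d)" using Suc h by auto
          then show ?thesis using D_mono[of x] h by linarith
        qed simp
      qed
    qed
  qed
  then show ?thesis using assms by blast
qed

lemma D0: "card (Dset 0) = 2^(k-m)"
proof -
  have h1: "a \<in> Dset 0 \<longleftrightarrow> a div 2^(k-m) = 1" if "a < 2^k" for a
  proof -
    have km: "k = (k - m) + m" using cL c1 by simp
    have "a div 2^(k-m) < 2^m" using that km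
      by (metis less_mult_imp_div_less power_add mult.commute)
    then have "Wn m (k-m) a = a div 2^(k-m)" unfolding Wn_def by simp
    then show ?thesis unfolding Dset_def occ_def using that by auto
  qed
  have h2: "a div 2^(k-m) = 1 \<longleftrightarrow> a \<in> {2^(k-m)..<2^(k-m+1)}" for a :: nat
  proof -
    have "a div 2^(k-m) = 1 \<longleftrightarrow> 2^(k-m) \<le> a \<and> a < 2 * 2^(k-m)"
      by (rule div_eq_one) simp
    then show ?thesis by auto
  qed
  have h3: "2^(k-m+1) \<le> (2::nat)^k" using cL c1 m1 by (intro power_increasing) auto
  have h4: "x \<in> Dset 0 \<Longrightarrow> x < 2^k" for x unfolding Dset_def by auto
  have "Dset 0 = {2^(k-m)..<2^(k-m+1)}"
  proof
    show "Dset 0 \<subseteq> {2^(k-m)..<2^(k-m+1)}"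
    proof
      fix x assume "x \<in> Dset 0"
      then show "x \<in> {2^(k-m)..<2^(k-m+1)}" using h1 h2 h4 by blast
    qed
    show "{2^(k-m)..<2^(k-m+1)} \<subseteq> Dset 0"
    proof
      fix x :: nat assume x: "x \<in> {2^(k-m)..<2^(k-m+1)}"
      then have "x < 2^k" using h3 by auto
      then show "x \<in> Dset 0" using h1 h2 x by blast
    qed
  qed
  then show ?thesis by simp
qed

lemma S_bounds:
  "real c * card (Dset c) \<le> card Sset" "card Sset \<le> c * 2^(k-m)" "1 \<le> card Sset"
proof -
  have "(\<Sum>d<c. card (Dset c)) \<le> (\<Sum>d<c. card (Dset d))"
    by (rule sum_mono) (use D_mono' cL in auto)
  then have "c * card (Dset c) \<le> card Sset" unfolding card_S by simp
  then show "real c * card (Dset c) \<le> card Sset" by (metis of_nat_mult of_nat_le_iff)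
  have "(\<Sum>d<c. card (Dset d)) \<le> (\<Sum>d<c. card (Dset 0))"
    by (rule sum_mono) (use D_mono' cL in auto)
  then show "card Sset \<le> c * 2^(k-m)" unfolding card_S D0 by simp
  have "card (Dset 0) \<le> (\<Sum>d<c. card (Dset d))"
    using member_le_sum[of 0 "{..<c}" "\<lambda>d. card (Dset d)"] c1 by simp
  then show "1 \<le> card Sset" unfolding card_S D0 by (meson le_trans one_le_power one_le_numeral)
qed

lemma S_half: "real (card Sset) \<le> 2^k / 2"
proof -
  have "c * 2^(k-m) \<le> 2^(m-1) * 2^(k-m)" using c2 by simp
  also have "\<dots> = (2::nat)^(k-1)" using cL c1 m1 by (simp flip: power_add)
  finally have "card Sset \<le> 2^(k-1)" using S_bounds(2) by linarith
  moreover have "(2::real)^k / 2 = 2^(k-1)" using k1 by (cases k) auto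
  ultimately show ?thesis by (metis of_nat_le_iff of_nat_numeral of_nat_power)
qed

lemma S_ratio: "cutf (2^k) (Af k) Sset / real (card Sset) \<le> 1 / real c"
proof -
  have pos: "real (card Sset) > 0" using S_bounds(3) by simp
  have "cutf (2^k) (Af k) Sset / real (card Sset) \<le> real (card (Dset c)) / real (card Sset)"
    using cut_le_D pos by (simp add: divide_right_mono)
  also have "\<dots> \<le> 1 / real c" using S_bounds(1) pos c1 by (simp add: field_simps)
  finally show ?thesis .
qed

end

definition Eset :: "nat \<Rightarrow> real set" where
  "Eset k = {cutf (2^k) (Af k) S / real (card S) | S. S \<subseteq> {..<2^k} \<and> 1 \<le> card S \<and> real (card S) \<le> 2^k / 2}"

lemma ee_eq: assumes k: "k \<ge> 1" shows "edge_expansion (de_bruijn k) = Min (Eset k)"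
proof -
  have dr: "dim_row (de_bruijn k) = 2^k" using db_carrier[of k] by simp
  define P where "P S \<longleftrightarrow> S \<subseteq> {..<(2::nat)^k} \<and> 1 \<le> card S \<and> real (card S) \<le> 2^k / 2" for S
  have l: "{(1 / real (card S)) * (\<Sum>i\<in>S. \<Sum>j\<in>{0..<2^k} - S. de_bruijn k $$ (i, j)) | S.
            S \<subseteq> {0..<2^k} \<and> 1 \<le> card S \<and> real (card S) \<le> real (2^k) / 2}
        = (\<lambda>S. (1 / real (card S)) * (\<Sum>i\<in>S. \<Sum>j\<in>{0..<2^k} - S. de_bruijn k $$ (i, j))) ` {S. P S}"
    unfolding P_def atLeast0LessThan by (auto simp: of_nat_power)
  have r: "Eset k = (\<lambda>S. cutf (2^k) (Af k) S / real (card S)) ` {S. P S}"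
    unfolding Eset_def P_def by auto
  have "(1 / real (card S)) * (\<Sum>i\<in>S. \<Sum>j\<in>{0..<2^k} - S. de_bruijn k $$ (i, j))
        = cutf (2^k) (Af k) S / real (card S)" if S: "S \<in> {S. P S}" for S
  proof -
    have S': "S \<subseteq> {..<2^k}" using S unfolding P_def by auto
    have "(\<Sum>i\<in>S. \<Sum>j\<in>{0..<2^k} - S. de_bruijn k $$ (i, j)) = cutf (2^k) (Af k) S"
      unfolding cutf_def atLeast0LessThan
      by (rule sum.cong[OF refl], rule sum.cong[OF refl]) (use S' db_entry[OF k] in auto)
    then show ?thesis by simp
  qed
  then have "(\<lambda>S. (1 / real (card S)) * (\<Sum>i\<in>S. \<Sum>j\<in>{0..<2^k} - S. de_bruijn k $$ (i, j))) ` {S. P S}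
      = Eset k" unfolding r by (rule image_cong[OF refl])
  then show ?thesis unfolding edge_expansion_def Let_def dr l by simp
qed

lemma Eset_fin: "finite (Eset k)"
proof -
  have "Eset k \<subseteq> (\<lambda>S. cutf (2^k) (Af k) S / real (card S)) ` Pow {..<2^k}"
    unfolding Eset_def by auto
  then show ?thesis by (rule finite_subset) simp
qed

lemma S0_in: assumes k: "k \<ge> 1" shows "cutf (2^k) (Af k) {0} / real (card {0::nat}) \<in> Eset k"
proof -
  have "(2::real) \<le> 2^k" using k by (metis power_one_right power_increasing one_le_numeral)
  then have "{0::nat} \<subseteq> {..<2^k} \<and> 1 \<le> card {0::nat} \<and> real (card {0::nat}) \<le> 2^k / 2" by auto
  then show ?thesis unfolding Eset_def by blast
qed

lemma ee_lower: assumes k: "k \<ge> 1" shows "1 / (2 * real k) \<le> edge_expansion (de_bruijn k)"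
proof -
  have "1 / (2 * real k) \<le> x" if "x \<in> Eset k" for x
  proof -
    from that obtain S where S: "S \<subseteq> {..<2^k}" "1 \<le> card S" "real (card S) \<le> 2^k / 2"
      and x: "x = cutf (2^k) (Af k) S / real (card S)" unfolding Eset_def by auto
    have "real (card S) / (2 * real k) \<le> cutf (2^k) (Af k) S" by (rule cut_lower[OF k S])
    then show ?thesis unfolding x using S(2) k by (simp add: field_simps)
  qed
  moreover have "Eset k \<noteq> {}" using S0_in[OF k] by auto
  ultimately show ?thesis unfolding ee_eq[OF k] using Eset_fin by (simp add: Min_ge_iff)
qed

lemma ee_upper: assumes k: "k \<ge> 1" shows "edge_expansion (de_bruijn k) \<le> 8 / real k"
proof (cases "k \<ge> 4")
  case True
  define c where "c = k div 8 + 1"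
  define m where "m = c + 1"
  have e: "k div 8 < 2^(k div 8)" by (rule less_exp)
  have e2: "k div 8 + 1 \<le> 2^(k div 8)" using e by linarith
  have p5: "c \<le> 2^(m-1)" unfolding m_def c_def using e2 by simp
  have p: "k \<ge> 1" "m \<ge> 1" "c \<ge> 1" "c \<le> k - m" "c \<le> 2^(m-1)"
    using k True p5 unfolding m_def c_def by auto
  have "Min (Eset k) \<le> cutf (2^k) (Af k) (Sset k m c) / real (card (Sset k m c))"
    using Eset_fin
  proof (rule Min_le)
    show "cutf (2^k) (Af k) (Sset k m c) / real (card (Sset k m c)) \<in> Eset k"
      unfolding Eset_def using S_sub[OF p] S_bounds(3)[OF p] S_half[OF p] by blast
  qed
  also have "\<dots> \<le> 1 / real c" by (rule S_ratio[OF p])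
  also have "\<dots> \<le> 8 / real k"
  proof -
    have "k \<le> 8 * c" unfolding c_def by presburger
    then have "real k \<le> 8 * real c" by linarith
    then show ?thesis using p(3) True by (simp add: field_simps)
  qed
  finally show ?thesis unfolding ee_eq[OF k] .
next
  case False
  have "Min (Eset k) \<le> cutf (2^k) (Af k) {0} / real (card {0::nat})"
    using Eset_fin S0_in[OF k] by (rule Min_le)
  also have "\<dots> \<le> 1"
  proof -
    have "cutf (2^k) (Af k) {0} = (\<Sum>j\<in>{..<2^k} - {0}. Af k 0 j)" unfolding cutf_def by simp
    also have "\<dots> \<le> (\<Sum>j<2^k. Af k 0 j)" by (rule sum_mono2) (auto simp: Af_nonneg)
    also have "\<dots> = 1" using Af_row_sum[OF k, of 0] by simp
    finally show ?thesis by simp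
  qed
  also have "\<dots> \<le> 8 / real k" using False k by (simp add: field_simps)
  finally show ?thesis unfolding ee_eq[OF k] .
qed

lemma log_n: "log 2 (real ((2::nat)^k)) = real k"
  by (simp add: log_nat_power)

definition chi :: "nat \<Rightarrow> nat \<Rightarrow> nat \<Rightarrow> real" where
  "chi k t a = (\<Prod>i<k. if bit t i \<and> bit a i then -1 else 1)"

lemma chi_Suc: "chi (Suc k) t a = chi k t a * (if bit t k \<and> bit a k then -1 else 1)"
  unfolding chi_def by simp

lemma chi_Suc_low: "chi (Suc k) t a = (if odd t \<and> odd a then -1 else 1) * chi k (t div 2) (a div 2)"
  unfolding chi_def prod.lessThan_Suc_shift by (simp add: bit_Suc bit_0)

lemma chi_mod: "chi k t (a mod 2^k) = chi k t a"
  unfolding chi_def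
  by (rule prod.cong[OF refl]) (simp add: take_bit_eq_mod[symmetric] bit_take_bit_iff)

lemma chi_mod_t: "chi k (t mod 2^k) a = chi k t a"
  unfolding chi_def
  by (rule prod.cong[OF refl]) (simp add: take_bit_eq_mod[symmetric] bit_take_bit_iff)

lemma bit_small: "(a::nat) < 2^k \<Longrightarrow> \<not> bit a k"
  by (simp add: bit_iff_odd)

lemma bit_top: "(a::nat) < 2^k \<Longrightarrow> bit (a + 2^k) k"
  by (simp add: bit_iff_odd)

lemma chi_top: "(a::nat) < 2^k \<Longrightarrow> chi k t (a + 2^k) = chi k t a"
  using chi_mod[of k t "a + 2^k"] by simp

lemma chi_low_half: "(a::nat) < 2^k \<Longrightarrow> chi (Suc k) t a = chi k t a"
  unfolding chi_Suc using bit_small by simp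

lemma chi_high_half: "(a::nat) < 2^k \<Longrightarrow> chi (Suc k) t (a + 2^k) = chi k t a * (if bit t k then -1 else 1)"
  unfolding chi_Suc using bit_top chi_top by simp

lemma sum_double: "(\<Sum>a<2 * (N::nat). f a) = (\<Sum>a<N. f a) + (\<Sum>a<N. f (a + N))"
proof -
  have "(\<Sum>a<2 * N. f a) = (\<Sum>a\<in>{0..<N}. f a) + (\<Sum>a\<in>{N..<N + N}. f a)"
    by (simp add: sum.atLeastLessThan_concat mult_2 atLeast0LessThan[symmetric])
  also have "(\<Sum>a\<in>{N..<N + N}. f a) = (\<Sum>a\<in>{0..<N}. f (a + N))"
    using sum.shift_bounds_nat_ivl[of f 0 N N] by simp
  finally show ?thesis by (simp add: atLeast0LessThan)
qed

lemma chi_orth: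
  "(\<Sum>a<2^k. chi k t a * chi k t' a) = (if \<forall>i<k. bit t i = bit t' i then 2^k else 0)"
proof (induct k)
  case 0
  then show ?case by (simp add: chi_def)
next
  case (Suc k)
  have "(\<Sum>a<2^Suc k. chi (Suc k) t a * chi (Suc k) t' a)
      = (\<Sum>a<2^k. chi (Suc k) t a * chi (Suc k) t' a)
        + (\<Sum>a<2^k. chi (Suc k) t (a + 2^k) * chi (Suc k) t' (a + 2^k))"
    by (simp add: sum_double)
  also have "\<dots> = (\<Sum>a<2^k. chi k t a * chi k t' a) * (1 + (if bit t k then -1 else 1) * (if bit t' k then -1 else 1))"
    by (simp add: chi_low_half chi_high_half sum.distrib[symmetric] sum_distrib_right algebra_simps)
  also have "\<dots> = (if \<forall>i<Suc k. bit t i = bit t' i then 2^Suc k else 0)"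
    unfolding Suc by (auto simp: less_Suc_eq)
  finally show ?case .
qed

lemma bits_eq: assumes "(t::nat) < 2^k" "t' < 2^k" "\<forall>i<k. bit t i = bit t' i" shows "t = t'"
proof (rule bit_eqI)
  fix n
  show "bit t n = bit t' n"
  proof (cases "n < k")
    case True
    then show ?thesis using assms(3) by auto
  next
    case False
    then have "(2::nat)^k \<le> 2^n" by simp
    then have "t < 2^n" "t' < 2^n" using assms(1,2) by linarith+
    then have "t div 2^n = 0" "t' div 2^n = 0" by (simp_all add: div_eq_0_iff)
    then show ?thesis by (simp add: bit_iff_odd)
  qed
qed

lemma chi_orth':
  assumes "t < 2^k" "t' < 2^k"
  shows "(\<Sum>a<2^k. chi k t a * chi k t' a) = (if t = t' then 2^k else 0)"
  unfolding chi_orth using bits_eq[OF assms] by auto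

lemma chi_A:
  assumes k: "k = Suc k'" and b: "b < 2^k" and t: "t < 2^k"
  shows "(\<Sum>a<2^k. Af k b a * chi k t a) = (if t < 2^k' then chi k (2 * t) b else 0)"
proof -
  let ?c = "b div 2"
  have c: "?c < 2^k'" using b k by (simp add: less_mult_imp_div_less)
  have "(\<Sum>a<2^k. Af k b a * chi k t a) = (chi k t ?c + chi k t (?c + 2^k')) / 2"
    by (rule row_sum_gen[OF k b])
  also have "\<dots> = chi k' t ?c * (1 + (if bit t k' then -1 else 1)) / 2"
    unfolding k using chi_low_half[OF c] chi_high_half[OF c] by (simp add: algebra_simps)
  also have "\<dots> = (if t < 2^k' then chi k' t ?c else 0)"
  proof -
    have "bit t k' \<longleftrightarrow> \<not> t < 2^k'"
    proof -
      have "t div 2^k' < 2" using t k by (simp add: less_mult_imp_div_less mult.commute)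
      then have "odd (t div 2^k') \<longleftrightarrow> t div 2^k' = 1" by (auto elim: oddE)
      also have "\<dots> \<longleftrightarrow> \<not> t < 2^k'"
      proof
        assume "t div 2^k' = 1" then show "\<not> t < 2^k'" by auto
      next
        assume "\<not> t < 2^k'"
        then have "t div 2^k' \<noteq> 0" by (simp add: div_eq_0_iff)
        then show "t div 2^k' = 1" using \<open>t div 2^k' < 2\<close> by linarith
      qed
      finally show ?thesis by (simp add: bit_iff_odd)
    qed
    then show ?thesis by auto
  qed
  also have "\<dots> = (if t < 2^k' then chi k (2 * t) b else 0)"
    unfolding k chi_Suc_low by simp
  finally show ?thesis .
qed

lemma chi_AT:
  assumes k: "k = Suc k'" and a: "a < 2^k" and t: "t < 2^k"
  shows "(\<Sum>b<2^k. Af k b a * chi k t b) = (if even t then chi k (t div 2) a else 0)"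
proof -
  let ?c = "a mod 2^k'"
  have "(\<Sum>b<2^k. Af k b a * chi k t b) = (chi k t (2 * ?c) + chi k t (2 * ?c + 1)) / 2"
    by (rule col_sum_gen[OF k a])
  also have "\<dots> = chi k' (t div 2) ?c * (1 + (if odd t then -1 else 1)) / 2"
    unfolding k chi_Suc_low by (simp add: algebra_simps)
  also have "\<dots> = (if even t then chi k' (t div 2) ?c else 0)" by auto
  also have "\<dots> = (if even t then chi k (t div 2) a else 0)"
  proof -
    have "t div 2 < 2^k'" using t k by (simp add: less_mult_imp_div_less)
    then have "chi k (t div 2) a = chi k' (t div 2) a"
      unfolding k chi_Suc using bit_small by simp
    then show ?thesis using chi_mod[of k' "t div 2" a] by simp
  qed
  finally show ?thesis .
qed

definition jdesc :: "(nat \<times> 'a) list \<Rightarrow> ('a \<times> bool) list" where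
  "jdesc n_as = concat (map (\<lambda>(l,x). map (\<lambda>s. (x, s \<noteq> 0)) [0..<l]) n_as)"

lemma jdesc_Cons: "jdesc ((l,x) # n_as) = map (\<lambda>s. (x, s \<noteq> 0)) [0..<l] @ jdesc n_as"
  unfolding jdesc_def by simp

lemma length_jdesc: "length (jdesc n_as) = sum_list (map fst n_as)"
  by (induct n_as) (auto simp: jdesc_def)

lemma jdesc_first: "jdesc n_as \<noteq> [] \<Longrightarrow> snd (jdesc n_as ! 0) = False"
proof (induct n_as)
  case Nil then show ?case by (simp add: jdesc_def)
next
  case (Cons p n_as)
  obtain l x where p: "p = (l,x)" by force
  show ?case
  proof (cases l)
    case 0
    then show ?thesis using Cons unfolding p jdesc_Cons by simp
  next
    case (Suc l')
    then show ?thesis unfolding p jdesc_Cons by (simp add: nth_append)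
  qed
qed

lemma jordan_entry:
  fixes n_as :: "(nat \<times> 'a :: {zero,one}) list"
  assumes "i < sum_list (map fst n_as)" "j < sum_list (map fst n_as)"
  shows "jordan_matrix n_as $$ (i,j) = (if i = j then fst (jdesc n_as ! j)
           else if Suc i = j \<and> snd (jdesc n_as ! j) then 1 else 0)"
  using assms
proof (induct n_as arbitrary: i j)
  case Nil then show ?case by simp
next
  case (Cons p n_as)
  obtain l x where p: "p = (l,x)" by force
  let ?N = "sum_list (map fst n_as)"
  have ij: "i < l + ?N" "j < l + ?N" using Cons(2,3) p by auto
  have J: "jordan_matrix ((l,x) # n_as) $$ (i,j) =
     (if i < l then if j < l then jordan_block l x $$ (i,j) else 0
      else if j < l then 0 else jordan_matrix n_as $$ (i - l, j - l))"
    unfolding jordan_matrix_Cons using ij by (subst index_mat_four_block) auto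
  have D: "jdesc ((l,x) # n_as) ! j = (if j < l then (x, j \<noteq> 0) else jdesc n_as ! (j - l))"
    unfolding jdesc_Cons by (auto simp: nth_append)
  show ?case
  proof (cases "i < l")
    case True
    show ?thesis
    proof (cases "j < l")
      case True
      then show ?thesis unfolding p J D using \<open>i < l\<close> by auto
    next
      case False
      have "length (jdesc n_as) > 0" unfolding length_jdesc using ij(2) False by linarith
      then have "jdesc n_as \<noteq> []" by auto
      then have "Suc i = j \<Longrightarrow> \<not> snd (jdesc n_as ! (j - l))"
        using jdesc_first[of n_as] True False by (simp add: Suc_le_eq)
      then show ?thesis unfolding p J D using True False by auto
    qed
  next
    case False
    show ?thesis
    proof (cases "j < l")
      case True
      then show ?thesis unfolding p J D using False by auto
    next
      case False2: False
      have "jordan_matrix n_as $$ (i - l, j - l) = (if i - l = j - l then fst (jdesc n_as ! (j - l))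
           else if Suc (i - l) = j - l \<and> snd (jdesc n_as ! (j - l)) then 1 else 0)"
        by (rule Cons(1)) (use ij False False2 in auto)
      moreover have "(i - l = j - l) = (i = j)" "(Suc (i - l) = j - l) = (Suc i = j)"
        using False False2 by auto
      ultimately show ?thesis unfolding p J D using False False2 by auto
    qed
  qed
qed

definition bl :: "nat \<Rightarrow> (nat \<times> nat) list" where
  "bl k = (k, 1) # concat (map (\<lambda>r. map (\<lambda>i. (r, 2^(k-r) + 2*i + 1)) [0..<2^(k-r-1)]) [1..<k])"

definition chain :: "nat \<times> nat \<Rightarrow> (nat \<times> bool) list" where
  "chain p = (case p of (r,w) \<Rightarrow> map (\<lambda>s. (w * 2^(r-1-s), s \<noteq> 0)) [0..<r])"

definition cl :: "nat \<Rightarrow> (nat \<times> bool) list" where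
  "cl k = (0, False) # concat (map chain (bl k))"

definition good :: "nat \<Rightarrow> (nat \<times> bool) list \<Rightarrow> bool" where
  "good k xs \<longleftrightarrow> (\<forall>j<length xs. fst (xs!j) < 2^k
     \<and> (snd (xs!j) \<longrightarrow> 0 < j \<and> fst (xs!(j-1)) = 2 * fst (xs!j) \<and> fst (xs!j) < 2^(k-1))
     \<and> (\<not> snd (xs!j) \<longrightarrow> 2^(k-1) \<le> fst (xs!j)))"

lemma good_Nil: "good k []" unfolding good_def by simp

lemma good_append: assumes "good k xs" "good k ys" shows "good k (xs @ ys)"
  unfolding good_def
proof (intro allI impI)
  fix j assume j: "j < length (xs @ ys)"
  show "fst ((xs @ ys)!j) < 2^k
     \<and> (snd ((xs @ ys)!j) \<longrightarrow> 0 < j \<and> fst ((xs @ ys)!(j-1)) = 2 * fst ((xs @ ys)!j) \<and> fst ((xs @ ys)!j) < 2^(k-1))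
     \<and> (\<not> snd ((xs @ ys)!j) \<longrightarrow> 2^(k-1) \<le> fst ((xs @ ys)!j))"
  proof (cases "j < length xs")
    case True
    then show ?thesis using assms(1) unfolding good_def by (auto simp: nth_append)
  next
    case False
    define j' where "j' = j - length xs"
    have j': "j' < length ys" "j = j' + length xs" using j False unfolding j'_def by auto
    have g: "fst (ys!j') < 2^k
     \<and> (snd (ys!j') \<longrightarrow> 0 < j' \<and> fst (ys!(j'-1)) = 2 * fst (ys!j') \<and> fst (ys!j') < 2^(k-1))
     \<and> (\<not> snd (ys!j') \<longrightarrow> 2^(k-1) \<le> fst (ys!j'))" using assms(2) j'(1) unfolding good_def by blast
    have e1: "(xs @ ys)!j = ys!j'" using j' by (simp add: nth_append)
    have e2: "(xs @ ys)!(j-1) = ys!(j'-1)" if "0 < j'"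
    proof -
      have "j - 1 = (j' - 1) + length xs" "\<not> (j - 1 < length xs)" using j' that by auto
      then show ?thesis by (simp add: nth_append)
    qed
    show ?thesis unfolding e1 using g e2 j' by auto
  qed
qed

lemma good_concat: "(\<And>x. x \<in> set xss \<Longrightarrow> good k x) \<Longrightarrow> good k (concat xss)"
  by (induct xss) (auto intro: good_append good_Nil)

lemma good_chain:
  assumes k: "k \<ge> 1" and r: "1 \<le> r" and lo: "2^(k-1) \<le> w * 2^(r-1)" and hi: "w * 2^(r-1) < 2^k"
  shows "good k (chain (r,w))"
  unfolding good_def
proof (intro allI impI)
  fix j assume j: "j < length (chain (r,w))"
  then have jr: "j < r" by (simp add: chain_def)
  have nth: "chain (r,w) ! j = (w * 2^(r-1-j), j \<noteq> 0)"
    using jr by (simp add: chain_def)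
  have j1: "j - 1 < r" using jr by simp
  have nth': "chain (r,w) ! (j-1) = (w * 2^(r-1-(j-1)), j - 1 \<noteq> 0)"
    using j1 by (auto simp: chain_def simp del: upt_Suc)
  have le: "w * 2^(r-1-j) \<le> w * 2^(r-1)" by (intro mult_le_mono2 power_increasing) auto
  have kk: "(2::nat)^k = 2 * 2^(k-1)" using k by (cases k) auto
  have F1: "w * 2^(r-1-j) < 2^k" using le hi by (rule le_less_trans)
  have F2: "w * 2^(r-1-(j-1)) = 2 * (w * 2^(r-1-j)) \<and> w * 2^(r-1-j) < 2^(k-1)" if j0: "j \<noteq> 0"
  proof -
    have e: "r - 1 - (j - 1) = Suc (r - 1 - j)" using j0 jr by simp
    have A: "w * 2^(r-1-(j-1)) \<le> w * 2^(r-1)" by (intro mult_le_mono2 power_increasing) auto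
    have B: "w * 2^(r-1-(j-1)) = 2 * (w * 2^(r-1-j))" unfolding e by simp
    have "2 * (w * 2^(r-1-j)) < 2 * 2^(k-1)" using A B hi kk by linarith
    then show ?thesis using B by simp
  qed
  have F3: "2^(k-1) \<le> w * 2^(r-1-j)" if "j = 0" using lo that by simp
  show "fst (chain (r,w) ! j) < 2^k
     \<and> (snd (chain (r,w) ! j) \<longrightarrow> 0 < j \<and> fst (chain (r,w) ! (j-1)) = 2 * fst (chain (r,w) ! j)
          \<and> fst (chain (r,w) ! j) < 2^(k-1))
     \<and> (\<not> snd (chain (r,w) ! j) \<longrightarrow> 2^(k-1) \<le> fst (chain (r,w) ! j))"
    unfolding nth nth' using F1 F2 F3 by auto
qed

lemma bl_props:
  assumes k: "k \<ge> 1" and p: "(r,w) \<in> set (bl k)"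
  shows "1 \<le> r" "r \<le> k" "2^(k-1) \<le> w * 2^(r-1)" "w * 2^(r-1) < 2^k"
proof -
  have "1 \<le> r \<and> r \<le> k \<and> 2^(k-r) \<le> w \<and> w < 2 * 2^(k-r)"
  proof (cases "(r,w) = (k,1)")
    case True
    then show ?thesis using k by auto
  next
    case False
    then obtain i where r: "1 \<le> r" "r < k" and i: "i < 2^(k-r-1)" and w: "w = 2^(k-r) + 2*i + 1"
      using p unfolding bl_def by auto
    have "(2::nat)^(k-r) = 2 * 2^(k-r-1)" using r by (metis Suc_diff_Suc diff_Suc_1 diff_diff_left power_Suc plus_1_eq_Suc)
    then show ?thesis using r i w by auto
  qed
  then have h: "1 \<le> r" "r \<le> k" "2^(k-r) \<le> w" "w < 2 * 2^(k-r)" by auto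
  show "1 \<le> r" "r \<le> k" using h by auto
  have e: "(2::nat)^(k-r) * 2^(r-1) = 2^(k-1)" using h(1,2) by (simp flip: power_add)
  have a: "2^(k-r) * 2^(r-1) \<le> w * 2^(r-1)" by (rule mult_le_mono1[OF h(3)])
  show "2^(k-1) \<le> w * 2^(r-1)" using e a by linarith
  have "w * 2^(r-1) < 2 * 2^(k-r) * 2^(r-1)" using h(4) by simp
  also have "\<dots> = 2^k" using e k by (cases k) auto
  finally show "w * 2^(r-1) < 2^k" .
qed

lemma good_tail: assumes k: "k \<ge> 1" shows "good k (concat (map chain (bl k)))"
proof (rule good_concat)
  fix x assume "x \<in> set (map chain (bl k))"
  then obtain r w where "(r,w) \<in> set (bl k)" "x = chain (r,w)" by auto
  then show "good k x" using bl_props[OF k] good_chain[OF k] by metis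
qed

definition ts :: "nat \<Rightarrow> nat list" where "ts k = map fst (cl k)"

definition nas :: "nat \<Rightarrow> (nat \<times> real) list" where
  "nas k = (1, 1) # map (\<lambda>(r,w). (r, 0)) (bl k)"

lemma arith_sum: "k \<ge> 1 \<Longrightarrow> 1 + k + (\<Sum>r\<in>{1..<k}. 2^(k-r-1) * r) = (2::nat)^k"
proof (induct k rule: nat_induct_at_least)
  case base then show ?case by simp
next
  case (Suc k)
  have "(\<Sum>r\<in>{1..<Suc k}. 2^(Suc k-r-1) * r) = (\<Sum>r\<in>{1..<k}. 2^(k-r) * r) + k"
    using Suc(1) by (simp add: sum.atLeastLessThan_Suc)
  also have "(\<Sum>r\<in>{1..<k}. 2^(k-r) * r) = (\<Sum>r\<in>{1..<k}. 2 * (2^(k-r-1) * r))"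
  proof (rule sum.cong[OF refl])
    fix r assume "r \<in> {1..<k}"
    then have "r < k" by simp
    then have "k - r = Suc (k - r - 1)" by arith
    then show "2^(k-r) * r = 2 * (2^(k-r-1) * r)" by (metis mult.assoc power_Suc)
  qed
  also have "\<dots> = 2 * (\<Sum>r\<in>{1..<k}. 2^(k-r-1) * r)" by (simp add: sum_distrib_left)
  finally show ?case using Suc(2) by simp
qed

lemma length_chain: "length (chain p) = fst p" unfolding chain_def by (cases p) simp

lemma sum_list_concat': "sum_list (concat xss) = sum_list (map sum_list xss)"
  by (induct xss) auto

lemma sum_bl: "sum_list (map fst (bl k)) = k + (\<Sum>r\<in>{1..<k}. 2^(k-r-1) * r)"
proof -
  have "sum_list (map fst (concat (map (\<lambda>r. map (\<lambda>i. (r, 2^(k-r) + 2*i + 1)) [0..<2^(k-r-1)]) [1..<k])))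
      = sum_list (map (\<lambda>r. 2^(k-r-1) * r) [1..<k])"
    by (simp add: map_concat sum_list_concat' o_def map_replicate_const sum_list_replicate)
  then show ?thesis unfolding bl_def by (simp add: sum_set_upt_conv_sum_list_nat[symmetric])
qed

lemma length_cols: assumes "k \<ge> 1" shows "length (cl k) = 2^k"
proof -
  have "length (cl k) = 1 + sum_list (map fst (bl k))"
    unfolding cl_def by (simp add: length_concat o_def length_chain)
  then show ?thesis using arith_sum[OF assms] sum_bl by simp
qed

lemma odd_decomp: "(t::nat) > 0 \<Longrightarrow> \<exists>w j. odd w \<and> t = w * 2^j"
proof (induct t rule: less_induct)
  case (less t)
  show ?case
  proof (cases "odd t")
    case True then show ?thesis by (rule_tac x=t in exI, rule_tac x=0 in exI) simp
  next
    case False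
    then have "t div 2 < t" "t div 2 > 0" using less(2) by auto
    then obtain w j where "odd w" "t div 2 = w * 2^j" using less(1) by blast
    then show ?thesis using False by (rule_tac x=w in exI, rule_tac x="Suc j" in exI) auto
  qed
qed

lemma in_ts: assumes k: "k \<ge> 1" and t: "t < 2^k" shows "t \<in> set (ts k)"
proof (cases "t = 0")
  case True then show ?thesis unfolding ts_def cl_def by simp
next
  case False
  then obtain w j where w: "odd w" "t = w * 2^j" using odd_decomp by blast
  have w1: "1 \<le> w" using w(1) by (cases w) auto
  obtain p where p: "2^p \<le> w" "w < 2^(p+1)" using ex_power_ivl1[of 2 w] w1 by auto
  have "(2::nat)^(p+j) \<le> t" using p(1) w(2) by (simp add: power_add)
  then have "(2::nat)^(p+j) < 2^k" using t by linarith
  then have pj: "p + j < k" by simp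
  define r where "r = k - p"
  define s where "s = r - 1 - j"
  have rs: "s < r" "r - 1 - s = j" "1 \<le> r" unfolding s_def r_def using pj by auto
  have mem: "(r, w) \<in> set (bl k)"
  proof (cases "p = 0")
    case True
    then have "w = 1" "r = k" using p unfolding r_def by auto
    then show ?thesis unfolding bl_def by simp
  next
    case False
    have pp: "(2::nat)^p = 2 * 2^(p-1)" using False by (cases p) auto
    have "even ((2::nat)^p)" using False by simp
    then have "w \<noteq> 2^p" using w(1) by auto
    then have w2: "2^p + 1 \<le> w" using p(1) by simp
    define i where "i = (w - 2^p - 1) div 2"
    have ev: "even (w - 2^p - 1)" using w(1) \<open>even ((2::nat)^p)\<close> w2 by auto
    have wi: "w = 2^p + 2*i + 1" unfolding i_def using ev w2 by auto
    have "2*i + 1 < 2^p" using wi p(2) by simp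
    then have ii: "i < 2^(p-1)" using pp by linarith
    have kr: "k - r = p" "r < k" "1 \<le> r" unfolding r_def using pj False by auto
    have "(r, w) \<in> set (map (\<lambda>i. (r, 2^(k-r) + 2*i + 1)) [0..<2^(k-r-1)])"
    proof -
      have "i \<in> set [0..<2^(k-r-1)]" using ii kr by simp
      moreover have "(r, w) = (r, 2^(k-r) + 2*i + 1)" using wi kr by simp
      ultimately show ?thesis by auto
    qed
    moreover have "r \<in> set [1..<k]" using kr by simp
    ultimately show ?thesis unfolding bl_def by auto
  qed
  have "chain (r, w) ! s = (t, s \<noteq> 0)" unfolding chain_def using rs w(2) by simp
  moreover have "chain (r, w) ! s \<in> set (concat (map chain (bl k)))"
  proof -
    have "chain (r, w) ! s \<in> set (chain (r,w))" using nth_mem[of s "chain (r,w)"] rs(1) length_chain[of "(r,w)"] by simp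
    then show ?thesis using mem by auto
  qed
  ultimately show ?thesis unfolding ts_def cl_def by force
qed

lemma ts_lt: assumes k: "k \<ge> 1" and "x \<in> set (ts k)" shows "x < 2^k"
proof -
  have g: "good k (concat (map chain (bl k)))" by (rule good_tail[OF k])
  from assms(2) consider "x = 0" | "x \<in> fst ` set (concat (map chain (bl k)))"
    unfolding ts_def cl_def by auto
  then show ?thesis
  proof cases
    case 2
    then obtain y where "y \<in> set (concat (map chain (bl k)))" "x = fst y" by auto
    then obtain j where "j < length (concat (map chain (bl k)))" "y = concat (map chain (bl k)) ! j"
      by (metis in_set_conv_nth)
    then show ?thesis using g \<open>x = fst y\<close> unfolding good_def by blast
  qed simp
qed

lemma set_ts: assumes k: "k \<ge> 1" shows "set (ts k) = {..<2^k}"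
  using in_ts[OF k] ts_lt[OF k] by auto

lemma length_ts: "k \<ge> 1 \<Longrightarrow> length (ts k) = 2^k"
  unfolding ts_def using length_cols by simp

lemma distinct_ts: assumes k: "k \<ge> 1" shows "distinct (ts k)"
proof (rule card_distinct)
  have "card (set (ts k)) = 2^k" using set_ts[OF k] by simp
  then show "card (set (ts k)) = length (ts k)" unfolding length_ts[OF k] .
qed

lemma mset_nas: assumes k: "k \<ge> 1"
  shows "mset (nas k) = {#(1, 1)#} + (\<Sum>r\<in>{1..k-1}. replicate_mset (2 ^ (k - 1 - r)) (r, 0)) + {#(k, 0)#}"
proof -
  have "mset (map (\<lambda>(r,w). (r, 0::real)) (concat (map (\<lambda>r. map (\<lambda>i. (r, 2^(k-r) + 2*i + 1)) [0..<2^(k-r-1)]) [1..<k])))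
      = sum_list (map (\<lambda>r. replicate_mset (2^(k-r-1)) (r, 0)) [1..<k])"
    by (simp add: map_concat mset_concat o_def map_replicate_const)
  also have "\<dots> = (\<Sum>r\<in>set [1..<k]. replicate_mset (2^(k-r-1)) (r, 0))"
    by (rule interv_sum_list_conv_sum_set_nat)
  also have "\<dots> = (\<Sum>r\<in>{1..k-1}. replicate_mset (2 ^ (k - 1 - r)) (r, 0))"
  proof -
    have "{1..k-1} = set [1..<k]" using k by auto
    then show ?thesis by simp
  qed
  finally show ?thesis unfolding nas_def bl_def by (simp add: add.commute add.left_commute)
qed

lemma sum_nas: assumes k: "k \<ge> 1" shows "sum_list (map fst (nas k)) = 2^k"
proof -
  have "sum_list (map fst (nas k)) = 1 + sum_list (map fst (bl k))"
    unfolding nas_def by (simp add: o_def case_prod_beta)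
  then show ?thesis using arith_sum[OF k] sum_bl by simp
qed

lemma jdesc_nas: "jdesc (nas k) = (1, False) # map (\<lambda>(t,f). (0, f)) (concat (map chain (bl k)))"
proof -
  have "jdesc (map (\<lambda>(r,w). (r, 0::real)) xs) = map (\<lambda>(t,f). (0, f)) (concat (map chain xs))" for xs
    by (induct xs) (auto simp: jdesc_def chain_def)
  then show ?thesis unfolding nas_def jdesc_Cons by simp
qed

lemma cl_tail: "c > 0 \<Longrightarrow> cl k ! c = concat (map chain (bl k)) ! (c - 1)"
  unfolding cl_def by (cases c) auto

lemma length_tail: "k \<ge> 1 \<Longrightarrow> length (concat (map chain (bl k))) = 2^k - 1"
  using length_cols[of k] unfolding cl_def by simp

lemma cl_props:
  assumes k: "k \<ge> 1" and c: "c < 2^k"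
  shows "cl k ! 0 = (0, False)"
    and "fst (cl k ! c) < 2^k"
    and "snd (cl k ! c) \<Longrightarrow> 0 < c \<and> fst (cl k ! (c-1)) = 2 * fst (cl k ! c) \<and> fst (cl k ! c) < 2^(k-1)"
    and "0 < c \<Longrightarrow> \<not> snd (cl k ! c) \<Longrightarrow> 2^(k-1) \<le> fst (cl k ! c)"
proof -
  let ?tl = "concat (map chain (bl k))"
  have g: "good k ?tl" by (rule good_tail[OF k])
  have lt: "length ?tl = 2^k - 1" by (rule length_tail[OF k])
  have G: "fst (?tl!j) < 2^k
     \<and> (snd (?tl!j) \<longrightarrow> 0 < j \<and> fst (?tl!(j-1)) = 2 * fst (?tl!j) \<and> fst (?tl!j) < 2^(k-1))
     \<and> (\<not> snd (?tl!j) \<longrightarrow> 2^(k-1) \<le> fst (?tl!j))" if "j < 2^k - 1" for j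
    using g that lt unfolding good_def by auto
  show c0: "cl k ! 0 = (0, False)" unfolding cl_def by simp
  show "fst (cl k ! c) < 2^k"
  proof (cases "c = 0")
    case True then show ?thesis using c0 by simp
  next
    case False
    then show ?thesis using G[of "c-1"] c cl_tail[of c k] by auto
  qed
  show "0 < c \<and> fst (cl k ! (c-1)) = 2 * fst (cl k ! c) \<and> fst (cl k ! c) < 2^(k-1)"
    if s: "snd (cl k ! c)"
  proof -
    have c1: "0 < c" using s c0 by (cases c) auto
    have G1: "0 < c - 1 \<and> fst (?tl!(c-1-1)) = 2 * fst (?tl!(c-1)) \<and> fst (?tl!(c-1)) < 2^(k-1)"
      using G[of "c-1"] c c1 s cl_tail[of c k] by auto
    then have "cl k ! (c-1) = ?tl ! (c-1-1)" using cl_tail[of "c-1" k] by simp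
    then show ?thesis using G1 c1 cl_tail[of c k] by simp
  qed
  show "2^(k-1) \<le> fst (cl k ! c)" if "0 < c" "\<not> snd (cl k ! c)"
    using G[of "c-1"] c that cl_tail[of c k] by auto
qed

lemma ts_nth: "k \<ge> 1 \<Longrightarrow> c < 2^k \<Longrightarrow> ts k ! c = fst (cl k ! c)"
  unfolding ts_def using length_cols[of k] by simp

lemma jdesc_nas_nth:
  assumes k: "k \<ge> 1" and c: "c < 2^k"
  shows "jdesc (nas k) ! c = (if c = 0 then 1 else 0, snd (cl k ! c))"
proof (cases c)
  case 0 then show ?thesis unfolding jdesc_nas using cl_props(1)[OF k c] by simp
next
  case (Suc c')
  have "c' < length (concat (map chain (bl k)))" using length_tail[OF k] c Suc by simp
  then show ?thesis unfolding jdesc_nas Suc using cl_tail[of "Suc c'" k]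
    by (simp add: case_prod_beta)
qed

lemma mult_entry:
  assumes "A \<in> carrier_mat n m" "B \<in> carrier_mat m p" "i < n" "j < p"
  shows "(A * B) $$ (i,j) = (\<Sum>l<m. A $$ (i,l) * B $$ (l,j))"
  using assms by (simp add: scalar_prod_def atLeast0LessThan)

definition Tc :: "nat \<Rightarrow> nat \<Rightarrow> nat" where "Tc k c = fst (cl k ! c)"

definition Um :: "nat \<Rightarrow> real mat" where
  "Um k = mat (2^k) (2^k) (\<lambda>(a,c). chi k (Tc k c) a / sqrt (2^k))"

definition Vm :: "nat \<Rightarrow> real mat" where
  "Vm k = mat (2^k) (2^k) (\<lambda>(a,c). if Tc k c < 2^(k-1) then chi k (2 * Tc k c) a / sqrt (2^k) else 0)"

definition Dg :: "nat \<Rightarrow> real mat" where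
  "Dg k = mat (2^k) (2^k) (\<lambda>(i,j). if i = j then (if Tc k j < 2^(k-1) then 1 else 0) else 0)"

lemma Um_carrier: "Um k \<in> carrier_mat (2^k) (2^k)" unfolding Um_def by simp
lemma Vm_carrier: "Vm k \<in> carrier_mat (2^k) (2^k)" unfolding Vm_def by simp
lemma Dg_carrier: "Dg k \<in> carrier_mat (2^k) (2^k)" unfolding Dg_def by simp
lemma J_carrier: "k \<ge> 1 \<Longrightarrow> jordan_matrix (nas k) \<in> carrier_mat (2^k) (2^k)"
  using jordan_matrix_carrier[of "nas k"] sum_nas by simp

lemma Tc_inj: assumes k: "k \<ge> 1" "c < 2^k" "c' < 2^k" shows "Tc k c = Tc k c' \<longleftrightarrow> c = c'"
proof -
  have "ts k ! c = ts k ! c' \<longleftrightarrow> c = c'"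
    using nth_eq_iff_index_eq[OF distinct_ts[OF k(1)]] k length_ts[OF k(1)] by simp
  then show ?thesis unfolding Tc_def using ts_nth k by simp
qed

lemma sq_n: "sqrt (2^k) * sqrt (2^k) = (2::real)^k" by simp

lemma UtU: assumes k: "k \<ge> 1" shows "transpose_mat (Um k) * Um k = 1\<^sub>m (2^k)"
proof (rule eq_matI)
  fix c c' assume c: "c < dim_row (1\<^sub>m (2^k))" and c': "c' < dim_col (1\<^sub>m (2^k))"
  have cc: "c < 2^k" "c' < 2^k" using c c' by auto
  have "(transpose_mat (Um k) * Um k) $$ (c, c') = (\<Sum>a<2^k. transpose_mat (Um k) $$ (c,a) * Um k $$ (a,c'))"
    by (rule mult_entry) (use cc Um_carrier in auto)
  also have "\<dots> = (\<Sum>a<2^k. Um k $$ (a,c) * Um k $$ (a,c'))"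
    by (rule sum.cong[OF refl]) (use cc in \<open>simp add: Um_def\<close>)
  also have "\<dots> = (\<Sum>a<2^k. chi k (Tc k c) a * chi k (Tc k c') a) / 2^k"
    unfolding Um_def using cc by (simp add: sum_divide_distrib)
  also have "\<dots> = (if c = c' then 1 else 0)"
    using chi_orth'[of "Tc k c" k "Tc k c'"] Tc_inj[OF k cc] cl_props(2)[OF k] cc unfolding Tc_def
    by auto
  finally show "(transpose_mat (Um k) * Um k) $$ (c, c') = 1\<^sub>m (2^k) $$ (c, c')" using cc by simp
qed (auto simp: Um_def)

lemma AU: assumes k: "k \<ge> 1" shows "de_bruijn k * Um k = Vm k"
proof (rule eq_matI)
  fix a c assume a: "a < dim_row (Vm k)" and c: "c < dim_col (Vm k)"
  have ac: "a < 2^k" "c < 2^k" using a c by (auto simp: Vm_def)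
  obtain k' where k': "k = Suc k'" using k by (cases k) auto
  have t: "Tc k c < 2^k" using cl_props(2)[OF k ac(2)] unfolding Tc_def .
  have "(de_bruijn k * Um k) $$ (a, c) = (\<Sum>l<2^k. de_bruijn k $$ (a,l) * Um k $$ (l,c))"
    by (rule mult_entry) (use ac db_carrier Um_carrier in auto)
  also have "\<dots> = (\<Sum>l<2^k. Af k a l * chi k (Tc k c) l) / sqrt (2^k)"
    unfolding sum_divide_distrib
    by (rule sum.cong[OF refl]) (use ac db_entry[OF k] in \<open>simp add: Um_def\<close>)
  also have "\<dots> = Vm k $$ (a, c)"
    using chi_A[OF k' ac(1) t] ac k' by (simp add: Vm_def)
  finally show "(de_bruijn k * Um k) $$ (a, c) = Vm k $$ (a, c)" .
qed (auto simp: Vm_def Um_def db_carrier[THEN carrier_matD(1)])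

lemma UJ: assumes k: "k \<ge> 1" shows "Um k * jordan_matrix (nas k) = Vm k"
proof (rule eq_matI)
  fix a c assume a: "a < dim_row (Vm k)" and c: "c < dim_col (Vm k)"
  have ac: "a < 2^k" "c < 2^k" using a c by (auto simp: Vm_def)
  let ?J = "jordan_matrix (nas k)"
  have Je: "?J $$ (c', c) = (if c' = c then (if c = 0 then 1 else 0)
        else if Suc c' = c \<and> snd (cl k ! c) then 1 else 0)" if c': "c' < 2^k" for c'
    using jordan_entry[of c' "nas k" c] sum_nas[OF k] c' ac jdesc_nas_nth[OF k ac(2)] by simp
  have "(Um k * ?J) $$ (a, c) = (\<Sum>c'<2^k. Um k $$ (a,c') * ?J $$ (c',c))"
    by (rule mult_entry) (use ac J_carrier[OF k] Um_carrier in auto)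
  also have "\<dots> = Vm k $$ (a, c)"
  proof (cases "c = 0")
    case True
    have "(\<Sum>c'<2^k. Um k $$ (a,c') * ?J $$ (c',c)) = (\<Sum>c'<2^k. if c' = 0 then Um k $$ (a,c') else 0)"
      by (rule sum.cong[OF refl]) (use Je True in auto)
    also have "\<dots> = Um k $$ (a, 0)" by simp
    also have "\<dots> = Vm k $$ (a, c)" using True ac cl_props(1)[OF k ac(2)] k
      by (simp add: Um_def Vm_def Tc_def)
    finally show ?thesis .
  next
    case False
    show ?thesis
    proof (cases "snd (cl k ! c)")
      case True
      note cp = cl_props(3)[OF k ac(2) True]
      have "(\<Sum>c'<2^k. Um k $$ (a,c') * ?J $$ (c',c)) = (\<Sum>c'<2^k. if c' = c - 1 then Um k $$ (a,c') else 0)"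
        by (rule sum.cong[OF refl]) (use Je False True in auto)
      also have "\<dots> = Um k $$ (a, c - 1)" using ac by simp
      also have "\<dots> = Vm k $$ (a, c)" using ac cp
        by (simp add: Um_def Vm_def Tc_def)
      finally show ?thesis .
    next
      case F2: False
      have "(\<Sum>c'<2^k. Um k $$ (a,c') * ?J $$ (c',c)) = 0"
        by (rule sum.neutral) (use Je False F2 in auto)
      also have "\<dots> = Vm k $$ (a, c)"
        using ac cl_props(4)[OF k ac(2)] False F2 by (simp add: Vm_def Tc_def)
      finally show ?thesis .
    qed
  qed
  finally show "(Um k * ?J) $$ (a, c) = Vm k $$ (a, c)" .
qed (auto simp: Vm_def Um_def sum_nas[OF k])

lemma UtAU: assumes k: "k \<ge> 1"
  shows "transpose_mat (Um k) * de_bruijn k * Um k = jordan_matrix (nas k)"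
proof -
  let ?U = "Um k" and ?A = "de_bruijn k" and ?J = "jordan_matrix (nas k)"
  have cU: "?U \<in> carrier_mat (2^k) (2^k)" and cUt: "transpose_mat ?U \<in> carrier_mat (2^k) (2^k)"
    and cA: "?A \<in> carrier_mat (2^k) (2^k)" and cJ: "?J \<in> carrier_mat (2^k) (2^k)"
    using Um_carrier db_carrier J_carrier[OF k] by auto
  have "transpose_mat ?U * ?A * ?U = transpose_mat ?U * (?A * ?U)"
    using cU cUt cA by (simp add: assoc_mult_mat)
  also have "\<dots> = transpose_mat ?U * (?U * ?J)" using AU[OF k] UJ[OF k] by simp
  also have "\<dots> = (transpose_mat ?U * ?U) * ?J" using cU cUt cJ by (simp add: assoc_mult_mat)
  also have "\<dots> = ?J" using UtU[OF k] left_mult_one_mat[OF cJ] by simp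
  finally show ?thesis .
qed

lemma AtV: assumes k: "k \<ge> 1" shows "transpose_mat (de_bruijn k) * Vm k = Um k * Dg k"
proof (rule eq_matI)
  fix a c assume a: "a < dim_row (Um k * Dg k)" and c: "c < dim_col (Um k * Dg k)"
  have ac: "a < 2^k" "c < 2^k" using a c by (auto simp: Um_def Dg_def)
  obtain k' where k': "k = Suc k'" using k by (cases k) auto
  have t: "Tc k c < 2^k" using cl_props(2)[OF k ac(2)] unfolding Tc_def .
  have "(transpose_mat (de_bruijn k) * Vm k) $$ (a, c)
      = (\<Sum>b<2^k. transpose_mat (de_bruijn k) $$ (a,b) * Vm k $$ (b,c))"
    by (rule mult_entry) (use ac db_carrier Vm_carrier in auto)
  also have "\<dots> = (\<Sum>b<2^k. if Tc k c < 2^(k-1) then Af k b a * chi k (2 * Tc k c) b / sqrt (2^k) else 0)"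
  proof (rule sum.cong[OF refl])
    fix b assume "b \<in> {..<(2::nat)^k}"
    then have b: "b < 2^k" by simp
    have "transpose_mat (de_bruijn k) $$ (a,b) = de_bruijn k $$ (b,a)"
      using ac b db_carrier[of k] by simp
    then show "transpose_mat (de_bruijn k) $$ (a,b) * Vm k $$ (b,c)
        = (if Tc k c < 2^(k-1) then Af k b a * chi k (2 * Tc k c) b / sqrt (2^k) else 0)"
      using ac b db_entry[OF k b ac(1)] by (simp add: Vm_def)
  qed
  also have "\<dots> = (if Tc k c < 2^(k-1) then (\<Sum>b<2^k. Af k b a * chi k (2 * Tc k c) b) / sqrt (2^k) else 0)"
    by (simp add: sum_divide_distrib)
  also have "\<dots> = (if Tc k c < 2^(k-1) then chi k (Tc k c) a / sqrt (2^k) else 0)"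
  proof (cases "Tc k c < 2^(k-1)")
    case True
    then have "2 * Tc k c < 2^k" using k' by simp
    then show ?thesis using chi_AT[OF k' ac(1), of "2 * Tc k c"] True by simp
  qed simp
  also have "\<dots> = (\<Sum>c'<2^k. Um k $$ (a,c') * Dg k $$ (c',c))"
  proof -
    have "(\<Sum>c'<2^k. Um k $$ (a,c') * Dg k $$ (c',c))
        = (\<Sum>c'<2^k. if c' = c then Um k $$ (a,c) * (if Tc k c < 2^(k-1) then 1 else 0) else 0)"
      by (rule sum.cong[OF refl]) (use ac in \<open>auto simp: Dg_def\<close>)
    also have "\<dots> = Um k $$ (a,c) * (if Tc k c < 2^(k-1) then 1 else 0)" using ac by simp
    finally show ?thesis using ac by (simp add: Um_def)
  qed
  also have "\<dots> = (Um k * Dg k) $$ (a, c)"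
    by (rule mult_entry[symmetric]) (use ac Um_carrier Dg_carrier in auto)
  finally show "(transpose_mat (de_bruijn k) * Vm k) $$ (a, c) = (Um k * Dg k) $$ (a, c)" .
qed (auto simp: Vm_def Um_def Dg_def db_carrier[THEN carrier_matD(2)])

lemma UtAtAU: assumes k: "k \<ge> 1"
  shows "transpose_mat (Um k) * (transpose_mat (de_bruijn k) * de_bruijn k) * Um k = Dg k"
proof -
  let ?U = "Um k" and ?A = "de_bruijn k"
  have cU: "?U \<in> carrier_mat (2^k) (2^k)" and cUt: "transpose_mat ?U \<in> carrier_mat (2^k) (2^k)"
    and cA: "?A \<in> carrier_mat (2^k) (2^k)" and cAt: "transpose_mat ?A \<in> carrier_mat (2^k) (2^k)"
    and cD: "Dg k \<in> carrier_mat (2^k) (2^k)"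
    using Um_carrier db_carrier Dg_carrier by auto
  have cAA: "transpose_mat ?A * ?A \<in> carrier_mat (2^k) (2^k)" using cA cAt by simp
  have e1: "(transpose_mat ?A * ?A) * ?U = transpose_mat ?A * (?A * ?U)"
    by (rule assoc_mult_mat[OF cAt cA cU])
  have "transpose_mat ?U * (transpose_mat ?A * ?A) * ?U = transpose_mat ?U * ((transpose_mat ?A * ?A) * ?U)"
    by (rule assoc_mult_mat[OF cUt cAA cU])
  also have "\<dots> = transpose_mat ?U * (transpose_mat ?A * (?A * ?U))" unfolding e1 ..
  also have "\<dots> = transpose_mat ?U * (?U * Dg k)" using AU[OF k] AtV[OF k] by simp
  also have "\<dots> = (transpose_mat ?U * ?U) * Dg k" using cU cUt cD by (simp add: assoc_mult_mat)
  also have "\<dots> = Dg k" using UtU[OF k] left_mult_one_mat[OF cD] by simp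
  finally show ?thesis .
qed

lemma orth_similar:
  fixes U A :: "real mat"
  assumes cU: "U \<in> carrier_mat n n" and cA: "A \<in> carrier_mat n n" and UtU: "transpose_mat U * U = 1\<^sub>m n"
  shows "similar_mat A (transpose_mat U * A * U)"
proof -
  have cUt: "transpose_mat U \<in> carrier_mat n n" using cU by simp
  have UUt: "U * transpose_mat U = 1\<^sub>m n" by (rule mat_mult_left_right_inverse[OF cUt cU UtU])
  have cB: "transpose_mat U * A * U \<in> carrier_mat n n" using cU cA cUt by simp
  have "U * (transpose_mat U * A * U) = U * (transpose_mat U * (A * U))"
    using assoc_mult_mat[OF cUt cA cU] by simp
  also have "\<dots> = (U * transpose_mat U) * (A * U)"
    using assoc_mult_mat[OF cU cUt, of "A * U" n] cA cU by simp
  also have "\<dots> = A * U" using UUt cA cU by simp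
  finally have e: "U * (transpose_mat U * A * U) = A * U" .
  have "U * (transpose_mat U * A * U) * transpose_mat U = A * U * transpose_mat U" unfolding e ..
  also have "\<dots> = A * (U * transpose_mat U)" by (rule assoc_mult_mat[OF cA cU cUt])
  also have "\<dots> = A" using UUt cA by simp
  finally have "A = U * (transpose_mat U * A * U) * transpose_mat U" by simp
  then have "similar_mat_wit A (transpose_mat U * A * U) U (transpose_mat U)"
    by (intro similar_mat_witI[OF UUt UtU _ cA cB cU cUt])
  then show ?thesis unfolding similar_mat_def by blast
qed

lemma mp_mult: "map_poly (of_real::real\<Rightarrow>complex) (p * q) = map_poly of_real p * map_poly of_real q"
proof -
  interpret map_poly_comm_ring_hom "of_real :: real \<Rightarrow> complex" ..
  show ?thesis by (rule hom_mult)
qed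

lemma mp_pow: "map_poly (of_real::real\<Rightarrow>complex) (p ^ n) = map_poly of_real p ^ n"
proof -
  interpret map_poly_comm_ring_hom "of_real :: real \<Rightarrow> complex" ..
  show ?thesis by (rule hom_power)
qed

lemma mp_lin: "map_poly (of_real::real\<Rightarrow>complex) [:a, 1:] = [:of_real a, 1:]"
  by (simp add: map_poly_pCons)

lemma prod_pow_fst: "prod_list (map (\<lambda>(r,w). p ^ r) xs) = p ^ sum_list (map fst xs)"
  by (induct xs) (auto simp: power_add)

lemma char_poly_db: assumes k: "k \<ge> 1"
  shows "char_poly (de_bruijn k) = [:-1, 1:] * [:0, 1:] ^ (2^k - 1)"
proof -
  have "char_poly (de_bruijn k) = char_poly (jordan_matrix (nas k))"
    using char_poly_similar[OF orth_similar[OF Um_carrier db_carrier UtU[OF k]]] UtAU[OF k] by simp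
  also have "\<dots> = (\<Prod>(n, a)\<leftarrow>nas k. [:- a, 1:] ^ n)" by (rule jordan_matrix_char_poly)
  also have "\<dots> = [:-1, 1:] * prod_list (map (\<lambda>(r,w). [:0::real, 1:] ^ r) (bl k))"
  proof -
    have "map (\<lambda>(n, a). [:- a, 1:] ^ n) (nas k) = [:-1, 1:] # map (\<lambda>(r,w). [:0::real, 1:] ^ r) (bl k)"
      unfolding nas_def by (auto simp: case_prod_beta)
    then show ?thesis by (simp only: prod_list.Cons)
  qed
  also have "\<dots> = [:-1, 1:] * [:0, 1:] ^ (2^k - 1)"
  proof -
    have "sum_list (map fst (bl k)) = 2^k - 1" using sum_bl[of k] arith_sum[OF k] by simp
    then show ?thesis unfolding prod_pow_fst by simp
  qed
  finally show ?thesis .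
qed

lemma eig_db: assumes k: "k \<ge> 1"
  shows "eigenvalues_mset (de_bruijn k) = {#1#} + replicate_mset (2^k - 1) 0"
proof -
  have "eigenvalues_mset (de_bruijn k) = proots (map_poly of_real (char_poly (de_bruijn k)))"
    unfolding eigenvalues_mset_def by (simp add: of_real_hom.char_poly_hom[OF db_carrier])
  also have "map_poly of_real (char_poly (de_bruijn k)) = [:-1, 1:] * [:0::complex, 1:] ^ (2^k - 1)"
    unfolding char_poly_db[OF k] by (simp only: mp_mult mp_pow mp_lin of_real_minus of_real_1 of_real_0)
  also have "proots ([:-1, 1:] * [:0::complex, 1:] ^ (2^k - 1)) = {#1#} + replicate_mset (2^k - 1) 0"
    by (subst proots_mult) (auto simp: proots_power proots_linear_factor[of 0, simplified]
        proots_linear_factor[of "-1", simplified] repeat_mset_replicate_mset)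
  finally show ?thesis .
qed

definition dd :: "nat \<Rightarrow> nat \<Rightarrow> real" where
  "dd k c = (if Tc k c < 2^(k-1) then 1 else 0)"

lemma jdesc_diag: "jdesc (map (\<lambda>c. (1, f c)) xs) = map (\<lambda>c. (f c, False)) xs"
  by (induct xs) (auto simp: jdesc_def)

lemma Dg_jordan: "Dg k = jordan_matrix (map (\<lambda>c. (1, dd k c)) [0..<2^k])"
proof -
  have s: "sum_list (map fst (map (\<lambda>c. (1::nat, dd k c)) [0..<2^k])) = 2^k"
    by (simp add: o_def map_replicate_const sum_list_replicate)
  show ?thesis
  proof (rule eq_matI)
    fix i j assume i: "i < dim_row (jordan_matrix (map (\<lambda>c. (1, dd k c)) [0..<2^k]))"
      and j: "j < dim_col (jordan_matrix (map (\<lambda>c. (1, dd k c)) [0..<2^k]))"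
    have ij: "i < 2^k" "j < 2^k" using i j s by auto
    show "Dg k $$ (i, j) = jordan_matrix (map (\<lambda>c. (1, dd k c)) [0..<2^k]) $$ (i, j)"
      using jordan_entry[of i "map (\<lambda>c. (1, dd k c)) [0..<2^k]" j] s ij
      unfolding jdesc_diag by (simp add: Dg_def dd_def)
  qed (use s in \<open>auto simp: Dg_def\<close>)
qed

lemma mp_prod_lin: "map_poly (of_real::real\<Rightarrow>complex) (prod_list (map (\<lambda>c. [:- x c, 1:]) xs))
   = prod_list (map (\<lambda>c. [:- of_real (x c), 1:]) xs)"
proof (induct xs)
  case Nil then show ?case by simp
next
  case (Cons a xs)
  show ?case by (simp only: list.map prod_list.Cons mp_mult Cons mp_lin of_real_minus)
qed

lemma proots_prod_lin: "prod_list (map (\<lambda>c. [:- y c, 1:]) xs) \<noteq> (0 :: complex poly)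
   \<and> proots (prod_list (map (\<lambda>c. [:- y c, 1:]) xs)) = mset (map y xs)"
proof (induct xs)
  case Nil then show ?case by simp
next
  case (Cons a xs)
  have nz: "[:- y a, 1:] \<noteq> (0 :: complex poly)" by simp
  have "proots ([:- y a, 1:] * prod_list (map (\<lambda>c. [:- y c, 1:]) xs))
      = proots [:- y a, 1:] + proots (prod_list (map (\<lambda>c. [:- y c, 1:]) xs))"
    by (rule proots_mult[OF nz]) (use Cons in auto)
  also have "\<dots> = {#y a#} + mset (map y xs)"
    using Cons proots_linear_factor[of "- y a"] by simp
  finally have p: "proots ([:- y a, 1:] * prod_list (map (\<lambda>c. [:- y c, 1:]) xs)) = mset (map y (a # xs))"
    by simp
  have "[:- y a, 1:] * prod_list (map (\<lambda>c. [:- y c, 1:]) xs) \<noteq> 0"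
    using Cons nz by (simp only: mult_eq_0_iff de_Morgan_disj) blast
  then show ?case using p by (simp only: list.map prod_list.Cons not_False_eq_True simp_thms)
qed

lemma mset_ts: assumes k: "k \<ge> 1" shows "mset (ts k) = mset [0..<2^k]"
proof -
  have "set (ts k) = set [0..<2^k]" using set_ts[OF k] by (simp add: lessThan_atLeast0)
  then show ?thesis using set_eq_iff_mset_eq_distinct[OF distinct_ts[OF k] distinct_upt] by blast
qed

lemma mset_half: assumes k: "k \<ge> 1"
  shows "mset (map (\<lambda>t::nat. if t < 2^(k-1) then 1 else (0::real)) [0..<2^k])
       = replicate_mset (2^(k-1)) 1 + replicate_mset (2^(k-1)) 0"
proof -
  have kk: "(2::nat)^k = 2^(k-1) + 2^(k-1)" using k by (cases k) auto
  have "[0..<2^k] = [0..<2^(k-1)] @ [2^(k-1)..<2^(k-1) + 2^(k-1)]"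
    unfolding kk by (rule upt_add_eq_append) simp
  moreover have "map (\<lambda>t::nat. if t < 2^(k-1) then 1 else (0::real)) [0..<2^(k-1)] = replicate (2^(k-1)) 1"
    by (rule trans[OF map_cong[OF refl, of _ _ "\<lambda>_. 1"]]) (auto simp: map_replicate_const)
  moreover have "map (\<lambda>t::nat. if t < 2^(k-1) then 1 else (0::real)) [2^(k-1)..<2^(k-1) + 2^(k-1)] = replicate (2^(k-1)) 0"
    by (rule trans[OF map_cong[OF refl, of _ _ "\<lambda>_. 0"]]) (auto simp: map_replicate_const)
  ultimately show ?thesis by simp
qed

lemma map_nth_comp: "map (\<lambda>c. g (xs ! c)) [0..<length xs] = map g xs"
  by (rule nth_equalityI) auto

lemma sv_db: assumes k: "k \<ge> 1"
  shows "singular_values (de_bruijn k) = replicate_mset (2^k div 2) 1 + replicate_mset (2^k div 2) 0"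
proof -
  let ?A = "de_bruijn k"
  have cAt: "transpose_mat ?A \<in> carrier_mat (2^k) (2^k)" using db_carrier[of k] by simp
  have cAA: "transpose_mat ?A * ?A \<in> carrier_mat (2^k) (2^k)" by (rule mult_carrier_mat[OF cAt db_carrier])
  have "char_poly (transpose_mat ?A * ?A) = char_poly (Dg k)"
    using char_poly_similar[OF orth_similar[OF Um_carrier cAA UtU[OF k]]] UtAtAU[OF k] by simp
  also have "\<dots> = prod_list (map (\<lambda>c. [:- dd k c, 1:]) [0..<2^k])"
    unfolding Dg_jordan jordan_matrix_char_poly by (simp add: o_def)
  finally have cp: "char_poly (transpose_mat ?A * ?A) = prod_list (map (\<lambda>c. [:- dd k c, 1:]) [0..<2^k])" .
  have "eigenvalues_mset (transpose_mat ?A * ?A) = mset (map (\<lambda>c. complex_of_real (dd k c)) [0..<2^k])"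
    unfolding eigenvalues_mset_def of_real_hom.char_poly_hom[OF cAA] cp mp_prod_lin
    using proots_prod_lin[of "\<lambda>c. complex_of_real (dd k c)" "[0..<2^k]"] by simp
  then have "singular_values ?A = mset (map (\<lambda>c. sqrt (dd k c)) [0..<2^k])"
    unfolding singular_values_def by (simp add: image_mset.compositionality o_def)
  also have "map (\<lambda>c. sqrt (dd k c)) [0..<2^k] = map (\<lambda>t. if t < 2^(k-1) then 1 else 0) (ts k)"
  proof -
    have "map (\<lambda>c. sqrt (dd k c)) [0..<2^k] = map (\<lambda>c. (\<lambda>t. if t < 2^(k-1) then 1 else 0) (ts k ! c)) [0..<length (ts k)]"
      unfolding length_ts[OF k] by (rule map_cong[OF refl]) (auto simp: dd_def Tc_def ts_nth[OF k])
    also have "\<dots> = map (\<lambda>t. if t < 2^(k-1) then 1 else 0) (ts k)"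
      by (rule map_nth_comp)
    finally show ?thesis .
  qed
  also have "mset (map (\<lambda>t. if t < 2^(k-1) then 1 else (0::real)) (ts k))
      = mset (map (\<lambda>t. if t < 2^(k-1) then 1 else (0::real)) [0..<2^k])"
    by (simp only: mset_map mset_ts[OF k])
  also have "\<dots> = replicate_mset (2^(k-1)) 1 + replicate_mset (2^(k-1)) 0" by (rule mset_half[OF k])
  also have "(2::nat)^(k-1) = 2^k div 2" using k by (cases k) auto
  finally show ?thesis .
qed

lemma re_l2: assumes k: "k \<ge> 1" shows "re_lambda2 (de_bruijn k) = 0"
proof -
  have "(2::nat)^k \<ge> 2" using k by (metis power_one_right power_increasing one_le_numeral)
  then have "set_mset (eigenvalues_mset (de_bruijn k) - {#1#}) = {0}"
    unfolding eig_db[OF k] by simp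
  then show ?thesis unfolding re_lambda2_def by simp
qed

lemma gamma_db: assumes k: "k \<ge> 1" shows "Gamma (2^k) \<le> ereal (8 / real k)"
proof -
  have "Gamma (2^k) \<le> (if 1 - re_lambda2 (de_bruijn k) = 0 then \<infinity>
       else ereal (edge_expansion (de_bruijn k) / (1 - re_lambda2 (de_bruijn k))))"
    unfolding Gamma_def by (rule INF_lower) (use db_doubly_stochastic[OF k] in simp)
  also have "\<dots> = ereal (edge_expansion (de_bruijn k))" using re_l2[OF k] by simp
  also have "\<dots> \<le> ereal (8 / real k)" using ee_upper[OF k] by simp
  finally show ?thesis .
qed

theorem lemma4p10:
  fixes k :: nat
  assumes "k \<ge> 1"
  defines "n \<equiv> (2::nat) ^ k"
  defines "A \<equiv> de_bruijn k"
  shows "1 / (2 * log 2 (real n)) \<le> edge_expansion A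
         \<and> edge_expansion A \<le> 8 / log 2 (real n)
         \<and> doubly_stochastic n A
         \<and> eigenvalues_mset A = {#1#} + replicate_mset (n - 1) 0
         \<and> Gamma n \<le> ereal (8 / log 2 (real n))
         \<and> (\<exists>U n_as. U \<in> carrier_mat n n \<and> transpose_mat U * U = 1\<^sub>m n
           \<and> mset n_as = {#(1, 1)#}
               + (\<Sum>r\<in>{1..k-1}. replicate_mset (2 ^ (k - 1 - r)) (r, 0))
               + {#(k, 0)#}
           \<and> transpose_mat U * A * U = jordan_matrix n_as)
         \<and> singular_values A = replicate_mset (n div 2) 1 + replicate_mset (n div 2) 0"
proof -
  have k: "k \<ge> 1" by (rule assms(1))
  have ln: "log 2 (real n) = real k" unfolding n_def by (rule log_n)
  have ex: "\<exists>U n_as. U \<in> carrier_mat n n \<and> transpose_mat U * U = 1\<^sub>m n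
           \<and> mset n_as = {#(1, 1)#}
               + (\<Sum>r\<in>{1..k-1}. replicate_mset (2 ^ (k - 1 - r)) (r, 0))
               + {#(k, 0)#}
           \<and> transpose_mat U * A * U = jordan_matrix n_as"
  proof (intro exI conjI)
    show "Um k \<in> carrier_mat n n" unfolding n_def by (rule Um_carrier)
    show "transpose_mat (Um k) * Um k = 1\<^sub>m n" unfolding n_def by (rule UtU[OF k])
    show "mset (nas k) = {#(1, 1)#}
               + (\<Sum>r\<in>{1..k-1}. replicate_mset (2 ^ (k - 1 - r)) (r, 0))
               + {#(k, 0)#}" by (rule mset_nas[OF k])
    show "transpose_mat (Um k) * A * Um k = jordan_matrix (nas k)" unfolding A_def by (rule UtAU[OF k])
  qed
  show ?thesis
    unfolding ln
  proof (intro conjI)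
    show "1 / (2 * real k) \<le> edge_expansion A" unfolding A_def by (rule ee_lower[OF k])
    show "edge_expansion A \<le> 8 / real k" unfolding A_def by (rule ee_upper[OF k])
    show "doubly_stochastic n A" unfolding A_def n_def by (rule db_doubly_stochastic[OF k])
    show "eigenvalues_mset A = {#1#} + replicate_mset (n - 1) 0" unfolding A_def n_def by (rule eig_db[OF k])
    show "Gamma n \<le> ereal (8 / real k)" unfolding n_def by (rule gamma_db[OF k])
    show "singular_values A = replicate_mset (n div 2) 1 + replicate_mset (n div 2) 0"
      unfolding A_def n_def by (rule sv_db[OF k])
  qed (rule ex)
qed

end
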